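(* Let $t,b,k$ be positive integers with $4 \le k \le t$ such that $\ell = bk/(t(t-1))$ is an integer. Under model $(\mathcal{M}2)$, a circular design neighbor-balanced at distances 1 and 2, $d^*\in\Omega_{(t,b,k)}$, is universally optimal for the vector of total effects $\psi=\tau+\lambda+\rho$ over the class of all designs $d\in\Omega_{(t,b,k)}$ in which no treatment is a neighbor of itself at distance 1 or 2, i.e. $d(i,j)\neq d(i,j-1)$ and $d(i,j-1)\ne d(i,j+1)$ for all $1\le i\le b$, $1\le j\le k$.
   Context: Designs: there are $t$ treatments labelled $1,\dots,t$ and $b$ linear blocks. Block $i$ has inner plots $j=1,\dots,k$ and two border plots $j=0$ and $j=k+1$. A design $d$ assigns a treatment $d(i,j)$ to each plot, and is circular if $d(i,0)=d(i,k)$ and $d(i,k+1)=d(i,1)$ for all $i$. $\Omega_{(t,b,k)}$ is the set of all circular designs with $t$ treatments and $b$ blocks of length $k$. Model $(\mathcal{M}2)$: responses $Y_{i,j}$ ($1\le i\le b$, $1\le j\le k$) are uncorrelated with common variance and $\mathbb{E}(Y_{i,j})=\beta_i+\tau_{d(i,j)}+\lambda_{d(i,j-1)}+\rho_{d(i,j+1)}$; in vector form $\mathbb{E}(Y)=B\beta+T_d\tau+L_d\lambda+R_d\rho$, where $B$ is the block incidence matrix and $T_d,L_d,R_d$ ($bk\times t$) have in row $(i,j)$ a single $1$ in column $d(i,j)$, $d(i,j-1)$, $d(i,j+1)$ respectively. The total effects are $\psi=K'\alpha$ with $\alpha=(\tau',\lambda',\rho')'$, $K=\mathbf{1}_3\otimes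 I_t$. Information matrices: $A^+$ is the Moore–Penrose inverse, $\mathrm{pr}_{(A)}=A(A'A)^+A'$, $\mathrm{pr}^\perp_{(A)}=I-\mathrm{pr}_{(A)}$. In a model $\mathbb{E}(Y)=A\alpha+B\beta$ with uncorrelated homoscedastic errors, $C[\alpha]=A'\mathrm{pr}^\perp_{(B)}A$ and $C[K'\alpha]=X_1'\mathrm{pr}^\perp_{(X_2)}X_1$ with $X_1=AK(K'K)^+$, $X_2=(AM\mid B)$, $M=I-K(K'K)^+K'$. $C_d[\psi]$ is this matrix with $A=(T_d\mid L_d\mid R_d)$. A circular neighbor-balanced design (CNBD) is a design in $\Omega_{(t,b,k)}$ which is binary (each treatment at most once among the inner plots of each block), is a balanced block design (equal replication of treatments on inner plots and each unordered pair of distinct treatments occurring together in the same number of blocks), and such that for each ordered pair $(a,c)$ of distinct treatments exactly $\ell$ inner plots $(i,j)$ have $d(i,j)=a$, $d(i,j+1)=c$. A circular design neighbor-balanced at distances 1 and 2 (CNBD2) is a CNBD such that in addition for each ordered pair $(a,c)$ of distinct treatments exactly $\ell$ inner plots $(i,j)$ have $d(i,j-1)=a$ and $d(i,j+1)=c$. Universal optimality (Kiefer): $d^*$ is universally optimal over $\mathcal{D}$ if $\Phi(C_{d^*})\le\Phi(C_d)$ for all $d\in\mathcal{D}$ and every $\Phi$ on nonnegative definite symmetric $t\times t$ matrices, with values in $(-\infty,\infty]$, that is convex, has $\Phi(aC)$ nonincreasing in $a\ge0$, and is invariant under simultaneous permutation of rows and columns. *)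

theory Defs
  imports "Jordan_Normal_Form.Matrix" "HOL-Library.Extended_Real"
begin

text \<open>A design is a function d with d i j the treatment (in 1..t) of plot j (0..k+1) of block i
 (1..b). Values outside this index range are irrelevant.\<close>

definition is_design :: "nat \<Rightarrow> nat \<Rightarrow> nat \<Rightarrow> (nat \<Rightarrow> nat \<Rightarrow> nat) \<Rightarrow> bool" where
  "is_design t b k d \<longleftrightarrow> (\<forall>i\<in>{1..b}. \<forall>j\<in>{0..k+1}. d i j \<in> {1..t})"

definition circular :: "nat \<Rightarrow> nat \<Rightarrow> (nat \<Rightarrow> nat \<Rightarrow> nat) \<Rightarrow> bool" where
  "circular b k d \<longleftrightarrow> (\<forall>i\<in>{1..b}. d i 0 = d i k \<and> d i (k+1) = d i 1)"

definition Omega :: "nat \<Rightarrow> nat \<Rightarrow> nat \<Rightarrow> (nat \<Rightarrow> nat \<Rightarrow> nat) set" where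
  "Omega t b k = {d. is_design t b k d \<and> circular b k d}"

definition inner_plots :: "nat \<Rightarrow> nat \<Rightarrow> (nat \<times> nat) set" where
  "inner_plots b k = {1..b} \<times> {1..k}"

definition binary_design :: "nat \<Rightarrow> nat \<Rightarrow> (nat \<Rightarrow> nat \<Rightarrow> nat) \<Rightarrow> bool" where
  "binary_design b k d \<longleftrightarrow> (\<forall>i\<in>{1..b}. inj_on (d i) {1..k})"

definition balanced_block_design :: "nat \<Rightarrow> nat \<Rightarrow> nat \<Rightarrow> (nat \<Rightarrow> nat \<Rightarrow> nat) \<Rightarrow> bool" where
  "balanced_block_design t b k d \<longleftrightarrow>
     (\<exists>r. \<forall>a\<in>{1..t}. card {(i,j) \<in> inner_plots b k. d i j = a} = r) \<and>
     (\<exists>lam. \<forall>a\<in>{1..t}. \<forall>c\<in>{1..t}. a \<noteq> c \<longrightarrow>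
        card {i\<in>{1..b}. a \<in> d i ` {1..k} \<and> c \<in> d i ` {1..k}} = lam)"

definition CNBD :: "nat \<Rightarrow> nat \<Rightarrow> nat \<Rightarrow> nat \<Rightarrow> (nat \<Rightarrow> nat \<Rightarrow> nat) \<Rightarrow> bool" where
  "CNBD t b k l d \<longleftrightarrow> d \<in> Omega t b k \<and> binary_design b k d \<and> balanced_block_design t b k d \<and>
     (\<forall>a\<in>{1..t}. \<forall>c\<in>{1..t}. a \<noteq> c \<longrightarrow>
        card {(i,j) \<in> inner_plots b k. d i j = a \<and> d i (j+1) = c} = l)"

definition CNBD2 :: "nat \<Rightarrow> nat \<Rightarrow> nat \<Rightarrow> nat \<Rightarrow> (nat \<Rightarrow> nat \<Rightarrow> nat) \<Rightarrow> bool" where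
  "CNBD2 t b k l d \<longleftrightarrow> CNBD t b k l d \<and>
     (\<forall>a\<in>{1..t}. \<forall>c\<in>{1..t}. a \<noteq> c \<longrightarrow>
        card {(i,j) \<in> inner_plots b k. d i (j-1) = a \<and> d i (j+1) = c} = l)"

definition no_self_neighbors :: "nat \<Rightarrow> nat \<Rightarrow> (nat \<Rightarrow> nat \<Rightarrow> nat) \<Rightarrow> bool" where
  "no_self_neighbors b k d \<longleftrightarrow>
     (\<forall>i\<in>{1..b}. \<forall>j\<in>{1..k}. d i j \<noteq> d i (j-1) \<and> d i (j-1) \<noteq> d i (j+1))"

definition mp_inverse :: "real mat \<Rightarrow> real mat" where
  "mp_inverse A = (THE X. X \<in> carrier_mat (dim_col A) (dim_row A) \<and>
      A * X * A = A \<and> X * A * X = X \<and>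
      transpose_mat (A * X) = A * X \<and> transpose_mat (X * A) = X * A)"

definition proj :: "real mat \<Rightarrow> real mat" where
  "proj A = A * mp_inverse (transpose_mat A * A) * transpose_mat A"

definition proj_perp :: "real mat \<Rightarrow> real mat" where
  "proj_perp A = 1\<^sub>m (dim_row A) - proj A"

definition hconcat :: "real mat \<Rightarrow> real mat \<Rightarrow> real mat" where
  "hconcat A B = mat (dim_row A) (dim_col A + dim_col B)
     (\<lambda>(i,j). if j < dim_col A then A $$ (i,j) else B $$ (i, j - dim_col A))"

text \<open>Rows indexed by plots (i,j), i in 1..b, j in 1..k, as row number (i-1)*k + (j-1);
 treatment a corresponds to column a-1.\<close>
definition block_matrix :: "nat \<Rightarrow> nat \<Rightarrow> real mat" where
  "block_matrix b k = mat (b*k) b (\<lambda>(r,c). if r div k = c then 1 else 0)"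

definition treat_matrix :: "nat \<Rightarrow> nat \<Rightarrow> nat \<Rightarrow> int \<Rightarrow> (nat \<Rightarrow> nat \<Rightarrow> nat) \<Rightarrow> real mat" where
  "treat_matrix t b k s d = mat (b*k) t
     (\<lambda>(r,c). if d (r div k + 1) (nat (int (r mod k + 1) + s)) = c + 1 then 1 else 0)"

definition T_mat where "T_mat t b k d = treat_matrix t b k 0 d"
definition L_mat where "L_mat t b k d = treat_matrix t b k (-1) d"
definition R_mat where "R_mat t b k d = treat_matrix t b k 1 d"

text \<open>K = 1_3 (Kronecker) I_t.\<close>
definition K_mat :: "nat \<Rightarrow> real mat" where
  "K_mat t = mat (3*t) t (\<lambda>(i,j). if i mod t = j then 1 else 0)"

definition info_subsystem :: "real mat \<Rightarrow> real mat \<Rightarrow> real mat \<Rightarrow> real mat" where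
  "info_subsystem A B K =
     (let KKp = mp_inverse (transpose_mat K * K);
          X1 = A * K * KKp;
          M = 1\<^sub>m (dim_row K) - K * KKp * transpose_mat K;
          X2 = hconcat (A * M) B
      in transpose_mat X1 * proj_perp X2 * X1)"

definition C_total :: "nat \<Rightarrow> nat \<Rightarrow> nat \<Rightarrow> (nat \<Rightarrow> nat \<Rightarrow> nat) \<Rightarrow> real mat" where
  "C_total t b k d = info_subsystem
     (hconcat (hconcat (T_mat t b k d) (L_mat t b k d)) (R_mat t b k d))
     (block_matrix b k) (K_mat t)"

definition nnd_sym :: "nat \<Rightarrow> real mat \<Rightarrow> bool" where
  "nnd_sym t C \<longleftrightarrow> C \<in> carrier_mat t t \<and> transpose_mat C = C \<and>
     (\<forall>v \<in> carrier_vec t. v \<bullet> (C *\<^sub>v v) \<ge> 0)"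

definition kiefer_criterion :: "nat \<Rightarrow> (real mat \<Rightarrow> ereal) \<Rightarrow> bool" where
  "kiefer_criterion t \<Phi> \<longleftrightarrow>
     (\<forall>C. nnd_sym t C \<longrightarrow> \<Phi> C \<noteq> -\<infinity>) \<and>
     (\<forall>A B u. nnd_sym t A \<longrightarrow> nnd_sym t B \<longrightarrow> 0 < u \<longrightarrow> u < 1 \<longrightarrow>
        \<Phi> (u \<cdot>\<^sub>m A + (1 - u) \<cdot>\<^sub>m B) \<le> ereal u * \<Phi> A + ereal (1 - u) * \<Phi> B) \<and>
     (\<forall>C a a'. nnd_sym t C \<longrightarrow> 0 \<le> a \<longrightarrow> a \<le> a' \<longrightarrow> \<Phi> (a' \<cdot>\<^sub>m C) \<le> \<Phi> (a \<cdot>\<^sub>m C)) \<and>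
     (\<forall>C p. nnd_sym t C \<longrightarrow> p permutes {..<t} \<longrightarrow>
        \<Phi> (mat t t (\<lambda>(i,j). C $$ (p i, p j))) = \<Phi> C)"

definition universally_optimal ::
  "nat \<Rightarrow> ((nat \<Rightarrow> nat \<Rightarrow> nat) \<Rightarrow> real mat) \<Rightarrow> (nat \<Rightarrow> nat \<Rightarrow> nat) \<Rightarrow> (nat \<Rightarrow> nat \<Rightarrow> nat) set \<Rightarrow> bool" where
  "universally_optimal t C dstar D \<longleftrightarrow>
     (\<forall>\<Phi>. kiefer_criterion t \<Phi> \<longrightarrow> (\<forall>d\<in>D. \<Phi> (C dstar) \<le> \<Phi> (C d)))"

end

theory Submission
  imports Defs "Jordan_Normal_Form.Gauss_Jordan_Elimination"
begin

lemma assoc_dim: assumes "dim_col A = dim_row B" "dim_col B = dim_row C"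
  shows "A * B * C = A * (B * (C :: 'a :: semiring_0 mat))"
proof -
  have "A \<in> carrier_mat (dim_row A) (dim_row B)" "B \<in> carrier_mat (dim_row B) (dim_row C)" "C \<in> carrier_mat (dim_row C) (dim_col C)"
    using assms unfolding carrier_mat_def by auto
  thus ?thesis by (rule assoc_mult_mat)
qed

lemma transpose_mult_dim: assumes "dim_col A = dim_row B"
  shows "transpose_mat (A * B) = transpose_mat B * transpose_mat (A :: 'a :: comm_semiring_0 mat)"
proof -
  have "A \<in> carrier_mat (dim_row A) (dim_row B)" "B \<in> carrier_mat (dim_row B) (dim_col B)"
    using assms unfolding carrier_mat_def by auto
  thus ?thesis by (rule transpose_mult)
qed
lemma gram_zero:
  fixes X :: "real mat"
  assumes X: "X \<in> carrier_mat n m" and G: "transpose_mat X * X = 0\<^sub>m m m"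
  shows "X = 0\<^sub>m n m"
proof (rule eq_matI)
  fix i j assume i: "i < dim_row (0\<^sub>m n m :: real mat)" and j: "j < dim_col (0\<^sub>m n m :: real mat)"
  hence i: "i < n" and j: "j < m" by auto
  have "(transpose_mat X * X) $$ (j,j) = 0" using G j by simp
  hence "(\<Sum>l<n. X $$ (l,j) * X $$ (l,j)) = 0"
    using X j by (simp add: scalar_prod_def lessThan_atLeast0)
  hence "(\<Sum>l<n. (X $$ (l,j))^2) = 0" by (simp add: power2_eq_square)
  hence "\<forall>l\<in>{..<n}. (X $$ (l,j))^2 = 0"
    by (subst (asm) sum_nonneg_eq_0_iff) auto
  thus "X $$ (i,j) = 0\<^sub>m n m $$ (i,j)" using i j by simp
qed (use X in auto)

lemma ginv_exists:
  fixes A :: "real mat"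
  assumes A: "A \<in> carrier_mat n m"
  shows "\<exists>H \<in> carrier_mat m n. A * H * A = A"
proof -
  define C where "C = gauss_jordan_single A"
  note gj = gauss_jordan_single[OF A C_def[symmetric]]
  from gj(4) obtain P Q where CPA: "C = P * A" and P: "P \<in> carrier_mat n n" and Q: "Q \<in> carrier_mat n n"
    and PQ: "P * Q = 1\<^sub>m n" and QP: "Q * P = 1\<^sub>m n" by blast
  have Cc: "C \<in> carrier_mat n m" by (rule gj(2))
  from gj(3) obtain f where pf: "pivot_fun C f m" unfolding row_echelon_form_def using Cc by auto
  have dC: "dim_row C = n" using Cc by simp
  note pv = pivot_funD[OF dC pf]
  define H0 :: "real mat" where "H0 = mat m n (\<lambda>(j,i). if f i < m \<and> j = f i then 1 else 0)"
  have H0c: "H0 \<in> carrier_mat m n" unfolding H0_def by simp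
  have CH0: "(C * H0) $$ (a,i) = (if f i < m \<and> a = i then 1 else 0)" if a: "a < n" and i: "i < n" for a i
  proof -
    have "(C * H0) $$ (a,i) = (\<Sum>j\<in>{0..<m}. C $$ (a,j) * (if f i < m \<and> j = f i then 1 else 0))"
      using a i Cc H0c by (simp add: scalar_prod_def H0_def)
    also have "\<dots> = (if f i < m then C $$ (a, f i) else 0)"
      by (auto simp: if_distrib cong: if_cong)
    also have "\<dots> = (if f i < m \<and> a = i then 1 else 0)"
      using pv(4)[OF i] pv(5)[OF i _ a] by auto
    finally show ?thesis .
  qed
  have CHC: "C * H0 * C = C"
  proof (rule eq_matI)
    fix a c assume a: "a < dim_row C" and c: "c < dim_col C"
    hence a: "a < n" and c: "c < m" using Cc by auto
    have "(C * H0 * C) $$ (a,c) = (\<Sum>i\<in>{0..<n}. (C * H0) $$ (a,i) * C $$ (i,c))"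
      using a c Cc H0c by (simp add: scalar_prod_def del: assoc_mult_mat)
    also have "\<dots> = (\<Sum>i\<in>{0..<n}. (if f i < m \<and> a = i then 1 else 0) * C $$ (i,c))"
      using a by (intro sum.cong refl) (simp add: CH0)
    also have "\<dots> = (\<Sum>i\<in>{0..<n}. if i = a then (if f a < m then C $$ (a,c) else 0) else 0)"
      by (intro sum.cong) auto
    also have "\<dots> = (if f a < m then C $$ (a,c) else 0)"
      using a by simp
    also have "\<dots> = C $$ (a,c)"
    proof (cases "f a < m")
      case False
      hence "f a = m" using pv(1)[OF a] by simp
      thus ?thesis using pv(2)[OF a, of c] c by simp
    qed simp
    finally show "(C * H0 * C) $$ (a,c) = C $$ (a,c)" .
  qed (use Cc H0c in auto)
  have AQC: "A = Q * C"
  proof -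
    have "Q * C = (Q * P) * A" using CPA P Q A by simp
    thus ?thesis using QP A by simp
  qed
  define H where "H = H0 * P"
  have Hc: "H \<in> carrier_mat m n" unfolding H_def using H0c P by simp
  have "A * H * A = Q * (C * H0 * (P * Q) * C)"
    unfolding AQC H_def using Q Cc H0c P by (simp add: assoc_dim del: assoc_mult_mat)
  also have "\<dots> = A" using CHC PQ Cc H0c AQC by simp
  finally show ?thesis using Hc by blast
qed

lemma mult_minus_dim: assumes "dim_col A = dim_row B" "dim_row C = dim_row B" "dim_col C = dim_col B"
  shows "A * (B - C) = A * B - A * (C :: 'a :: ring mat)"
proof -
  have "A \<in> carrier_mat (dim_row A) (dim_row B)" "B \<in> carrier_mat (dim_row B) (dim_col B)" "C \<in> carrier_mat (dim_row B) (dim_col B)"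
    using assms unfolding carrier_mat_def by auto
  thus ?thesis by (rule mult_minus_distrib_mat)
qed

lemma minus_mult_dim: assumes "dim_col A = dim_row C" "dim_row B = dim_row A" "dim_col B = dim_col A"
  shows "(A - B) * C = A * C - B * (C :: 'a :: ring mat)"
proof -
  have "A \<in> carrier_mat (dim_row A) (dim_col A)" "B \<in> carrier_mat (dim_row A) (dim_col A)" "C \<in> carrier_mat (dim_col A) (dim_col C)"
    using assms unfolding carrier_mat_def by auto
  thus ?thesis by (rule minus_mult_distrib_mat)
qed

lemma transpose_minus_dim: assumes "dim_row B = dim_row A" "dim_col B = dim_col A"
  shows "transpose_mat (A - B) = transpose_mat A - transpose_mat (B :: 'a :: ab_group_add mat)"
  by (rule eq_matI) (use assms in auto)

lemma minus_plus_cancel_mat: "B \<in> carrier_mat (dim_row A) (dim_col A) \<Longrightarrow> A - B + B = (A :: 'a :: ab_group_add mat)"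
  by (rule eq_matI) auto

lemma ginv_gram:
  fixes X H :: "real mat"
  assumes X: "X \<in> carrier_mat n m" and H: "H \<in> carrier_mat m m"
    and g: "transpose_mat X * X * H * (transpose_mat X * X) = transpose_mat X * X"
  shows "X * H * (transpose_mat X * X) = X"
proof -
  define G where "G = transpose_mat X * X"
  have Gc: "G \<in> carrier_mat m m" unfolding G_def using X by simp
  define E where "E = X * H * G - X"
  have Ec: "E \<in> carrier_mat n m" unfolding E_def using X H Gc by (simp add: minus_carrier_mat)
  have "transpose_mat X * E = transpose_mat X * (X * H * G) - G"
    unfolding E_def G_def using X H Gc by (subst mult_minus_dim) auto
  also have "transpose_mat X * (X * H * G) = G * H * G"
    unfolding G_def using X H by (simp add: assoc_dim del: assoc_mult_mat)
  also have "G * H * G = G" using g unfolding G_def .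
  finally have XE: "transpose_mat X * E = 0\<^sub>m m m" using Gc by simp
  have EX: "transpose_mat E * X = 0\<^sub>m m m"
  proof -
    have "transpose_mat E * X = transpose_mat (transpose_mat X * E)"
      using X Ec by (simp add: transpose_mult_dim)
    thus ?thesis using XE by simp
  qed
  have "transpose_mat E * E = transpose_mat E * (X * H * G) - transpose_mat E * X"
    unfolding E_def using X H Gc Ec by (subst mult_minus_dim) (auto simp: E_def)
  also have "transpose_mat E * (X * H * G) = transpose_mat E * X * H * G"
    using X H Gc Ec by (simp add: assoc_dim del: assoc_mult_mat)
  finally have "transpose_mat E * E = 0\<^sub>m m m"
    using EX H Gc by simp
  hence "E = 0\<^sub>m n m" using gram_zero[OF Ec] by simp
  hence "X * H * G - X + X = 0\<^sub>m n m + X" unfolding E_def by simp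
  thus ?thesis unfolding G_def[symmetric] using X H Gc
    by (subst (asm) minus_plus_cancel_mat) (auto simp del: assoc_mult_mat)
qed

definition penrose :: "real mat \<Rightarrow> real mat \<Rightarrow> bool" where
  "penrose A X \<longleftrightarrow> X \<in> carrier_mat (dim_col A) (dim_row A) \<and>
      A * X * A = A \<and> X * A * X = X \<and>
      transpose_mat (A * X) = A * X \<and> transpose_mat (X * A) = X * A"

lemma mp_inverse_alt: "mp_inverse A = (THE X. penrose A X)"
  unfolding mp_inverse_def penrose_def by simp

lemma penrose_unique:
  assumes PX: "penrose A X" and PY: "penrose A Y"
  shows "X = Y"
proof -
  note px = PX[unfolded penrose_def] and py = PY[unfolded penrose_def]
  have dX: "dim_row X = dim_col A" "dim_col X = dim_row A" using px by auto
  have dY: "dim_row Y = dim_col A" "dim_col Y = dim_row A" using py by auto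
  note simps = dX dY assoc_dim transpose_mult_dim
  have AX: "A * X = transpose_mat X * transpose_mat A"
    using px dX by (metis transpose_mult_dim)
  have XA: "X * A = transpose_mat A * transpose_mat X"
    using px dX by (metis transpose_mult_dim)
  have AY: "A * Y = transpose_mat Y * transpose_mat A"
    using py dY by (metis transpose_mult_dim)
  have YA: "Y * A = transpose_mat A * transpose_mat Y"
    using py dY by (metis transpose_mult_dim)
  have AT: "transpose_mat A = transpose_mat A * (transpose_mat Y * transpose_mat A)"
  proof -
    have "transpose_mat A = transpose_mat (A * Y * A)" using py by simp
    also have "\<dots> = transpose_mat A * (transpose_mat Y * transpose_mat A)"
      using dY by (simp add: transpose_mult_dim assoc_dim del: assoc_mult_mat)
    finally show ?thesis .
  qed
  have AT2: "transpose_mat A = transpose_mat A * (transpose_mat X * transpose_mat A)"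
  proof -
    have "transpose_mat A = transpose_mat (A * X * A)" using px by simp
    also have "\<dots> = transpose_mat A * (transpose_mat X * transpose_mat A)"
      using dX by (simp add: transpose_mult_dim assoc_dim del: assoc_mult_mat)
    finally show ?thesis .
  qed
  have "X = X * (A * X)" using px dX by (simp add: assoc_dim del: assoc_mult_mat)
  also have "\<dots> = X * (transpose_mat X * transpose_mat A)" using AX by simp
  also have "\<dots> = X * (transpose_mat X * (transpose_mat A * (transpose_mat Y * transpose_mat A)))"
    using AT by simp
  also have "\<dots> = X * ((transpose_mat X * transpose_mat A) * (transpose_mat Y * transpose_mat A))"
    using dX dY by (simp add: assoc_dim del: assoc_mult_mat)
  also have "\<dots> = X * ((A * X) * (A * Y))" using AX AY by simp
  also have "\<dots> = (X * A * X) * (A * Y)" using dX dY by (simp add: assoc_dim del: assoc_mult_mat)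
  also have "\<dots> = X * (A * Y)" using px by simp
  finally have X1: "X = X * (A * Y)" .
  have "Y = (Y * A) * Y" using py by simp
  also have "\<dots> = (transpose_mat A * transpose_mat Y) * Y" using YA by simp
  also have "\<dots> = ((transpose_mat A * (transpose_mat X * transpose_mat A)) * transpose_mat Y) * Y"
    using AT2 by simp
  also have "\<dots> = ((transpose_mat A * transpose_mat X) * (transpose_mat A * transpose_mat Y)) * Y"
    using dX dY by (simp add: assoc_dim del: assoc_mult_mat)
  also have "\<dots> = ((X * A) * (Y * A)) * Y" using XA YA by simp
  also have "\<dots> = X * (A * (Y * A * Y))" using dX dY by (simp add: assoc_dim del: assoc_mult_mat)
  also have "\<dots> = X * (A * Y)" using py by simp
  finally have "Y = X * (A * Y)" .
  with X1 show ?thesis by simp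
qed

lemma penrose_exists_sym:
  fixes G :: "real mat"
  assumes G: "G \<in> carrier_mat n n" and S: "transpose_mat G = G"
  shows "\<exists>Y. penrose G Y"
proof -
  obtain H where H: "H \<in> carrier_mat n n" and gH: "G * G * H * (G * G) = G * G"
    using ginv_exists[of "G * G" n n] G by auto
  have GG: "transpose_mat G * G = G * G" using S by simp
  have e1: "G * H * (G * G) = G" using ginv_gram[OF G H] gH GG by simp
  have e1': "G * G * transpose_mat H * (G * G) = G * G"
  proof -
    have "G * G * transpose_mat H * (G * G) = transpose_mat (G * G * H * (G * G))"
      using G H S by (simp add: transpose_mult_dim assoc_dim del: assoc_mult_mat)
    also have "\<dots> = G * G" using gH G S by (simp add: transpose_mult_dim)
    finally show ?thesis .
  qed
  have e2: "G * transpose_mat H * (G * G) = G" using ginv_gram[OF G _] e1' GG H by simp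
  have e3: "G * G * H * G = G"
  proof -
    have "G * G * H * G = transpose_mat (G * transpose_mat H * (G * G))"
      using G H S by (simp add: transpose_mult_dim assoc_dim del: assoc_mult_mat)
    also have "\<dots> = G" using e2 S by simp
    finally show ?thesis .
  qed
  have sym: "transpose_mat (G * H * G) = G * H * G"
  proof -
    have "transpose_mat (G * H * G) = G * transpose_mat H * G"
      using G H S by (simp add: transpose_mult_dim assoc_dim del: assoc_mult_mat)
    also have "\<dots> = G * transpose_mat H * (G * G * H * G)" using e3 by simp
    also have "\<dots> = (G * transpose_mat H * (G * G)) * H * G"
      using G H by (simp add: assoc_dim del: assoc_mult_mat)
    also have "\<dots> = G * H * G" using e2 by simp
    finally show ?thesis .
  qed
  define Y where "Y = G * H * G * H * G"
  have Yc: "Y \<in> carrier_mat n n" unfolding Y_def using G H using carrier_matD[OF G] carrier_matD[OF H] by (intro carrier_matI) simp_all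
  have GY: "G * Y = G * H * G"
  proof -
    have "G * Y = (G * G * H * G) * H * G" unfolding Y_def using G H by (simp add: assoc_dim del: assoc_mult_mat)
    thus ?thesis using e3 by simp
  qed
  have YG: "Y * G = G * H * G"
  proof -
    have "Y * G = G * H * (G * H * (G * G))" unfolding Y_def using G H by (simp add: assoc_dim del: assoc_mult_mat)
    thus ?thesis using e1 by simp
  qed
  have "penrose G Y"
    unfolding penrose_def
  proof (intro conjI)
    show "Y \<in> carrier_mat (dim_col G) (dim_row G)" using Yc G by simp
    have "G * Y * G = G * H * (G * G)" using GY G H by (simp add: assoc_dim del: assoc_mult_mat)
    thus "G * Y * G = G" using e1 by simp
    have "Y * G * Y = G * H * (G * G * H * G) * H * G"
      unfolding YG unfolding Y_def using G H by (simp add: assoc_dim del: assoc_mult_mat)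
    thus "Y * G * Y = Y" using e3 unfolding Y_def by simp
    show "transpose_mat (G * Y) = G * Y" using GY sym by simp
    show "transpose_mat (Y * G) = Y * G" using YG sym by simp
  qed
  thus ?thesis by blast
qed

lemma mp_penrose_sym:
  assumes G: "G \<in> carrier_mat n n" and S: "transpose_mat G = G"
  shows "penrose G (mp_inverse G)"
proof -
  obtain Y where Y: "penrose G Y" using penrose_exists_sym[OF G S] by blast
  have "\<exists>!X. penrose G X" using Y penrose_unique by blast
  thus ?thesis unfolding mp_inverse_alt by (rule theI')
qed

lemma mp_inverse_eq:
  assumes "penrose G Y" shows "mp_inverse G = Y"
  unfolding mp_inverse_alt using assms penrose_unique by blast

lemma mp_sym:
  assumes G: "G \<in> carrier_mat n n" and S: "transpose_mat G = G"
  shows "transpose_mat (mp_inverse G) = mp_inverse G"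
proof -
  define Y where "Y = mp_inverse G"
  have p: "penrose G Y" unfolding Y_def by (rule mp_penrose_sym[OF G S])
  note pp = p[unfolded penrose_def]
  have Yc: "Y \<in> carrier_mat n n" using pp G by simp
  have "penrose G (transpose_mat Y)"
    unfolding penrose_def
  proof (intro conjI)
    show "transpose_mat Y \<in> carrier_mat (dim_col G) (dim_row G)" using Yc G by simp
    have "G * transpose_mat Y * G = transpose_mat (G * Y * G)"
      using G Yc S by (simp add: transpose_mult_dim assoc_dim del: assoc_mult_mat)
    thus "G * transpose_mat Y * G = G" using pp S by simp
    have "transpose_mat Y * G * transpose_mat Y = transpose_mat (Y * G * Y)"
      using G Yc S by (simp add: transpose_mult_dim assoc_dim del: assoc_mult_mat)
    thus "transpose_mat Y * G * transpose_mat Y = transpose_mat Y" using pp by simp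
    have a: "G * transpose_mat Y = Y * G"
    proof -
      have "G * transpose_mat Y = transpose_mat (Y * G)" using G Yc S by (simp add: transpose_mult_dim)
      thus ?thesis using pp by simp
    qed
    have b: "transpose_mat Y * G = G * Y"
    proof -
      have "transpose_mat Y * G = transpose_mat (G * Y)" using G Yc S by (simp add: transpose_mult_dim)
      thus ?thesis using pp by simp
    qed
    show "transpose_mat (G * transpose_mat Y) = G * transpose_mat Y" unfolding a using pp by simp
    show "transpose_mat (transpose_mat Y * G) = transpose_mat Y * G" unfolding b using pp by simp
  qed
  hence "transpose_mat Y = Y" using p penrose_unique by blast
  thus ?thesis unfolding Y_def .
qed


lemma proj_props:
  fixes X :: "real mat"
  assumes X: "X \<in> carrier_mat n m"
  shows "proj X \<in> carrier_mat n n" "proj X * X = X" "transpose_mat (proj X) = proj X"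
    "proj X * proj X = proj X"
proof -
  define G where "G = transpose_mat X * X"
  have Gc: "G \<in> carrier_mat m m" unfolding G_def using X by simp
  have Gs: "transpose_mat G = G" unfolding G_def using X by (simp add: transpose_mult_dim)
  define Y where "Y = mp_inverse G"
  have p: "penrose G Y" unfolding Y_def by (rule mp_penrose_sym[OF Gc Gs])
  note pp = p[unfolded penrose_def]
  have Yc: "Y \<in> carrier_mat m m" using pp Gc by simp
  have Ys: "transpose_mat Y = Y" unfolding Y_def by (rule mp_sym[OF Gc Gs])
  have PD: "proj X = X * Y * transpose_mat X" unfolding proj_def Y_def G_def ..
  show "proj X \<in> carrier_mat n n" unfolding PD using X Yc by (intro carrier_matI) (simp_all add: carrier_matD[OF X] carrier_matD[OF Yc])
  have XYG: "X * Y * G = X" using ginv_gram[OF X Yc] pp unfolding G_def by simp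
  show "proj X * X = X" unfolding PD using XYG X Yc carrier_matD[OF X] carrier_matD[OF Yc] unfolding G_def
    by (simp add: assoc_dim del: assoc_mult_mat)
  show "transpose_mat (proj X) = proj X" unfolding PD using X Yc Ys carrier_matD[OF X] carrier_matD[OF Yc]
    by (simp add: assoc_dim transpose_mult_dim del: assoc_mult_mat)
  have "proj X * proj X = X * (Y * G * Y) * transpose_mat X"
    unfolding PD G_def using X Yc carrier_matD[OF X] carrier_matD[OF Yc] by (simp add: assoc_dim del: assoc_mult_mat)
  thus "proj X * proj X = proj X" using pp unfolding PD by simp
qed

lemma compl_props:
  fixes P :: "real mat"
  assumes P: "P \<in> carrier_mat n n" and S: "transpose_mat P = P" and I: "P * P = P"
  shows "transpose_mat (1\<^sub>m n - P) = 1\<^sub>m n - P" "(1\<^sub>m n - P) * (1\<^sub>m n - P) = 1\<^sub>m n - P"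
proof -
  show "transpose_mat (1\<^sub>m n - P) = 1\<^sub>m n - P"
    using P S by (subst transpose_minus_dim) auto
  have "(1\<^sub>m n - P) * (1\<^sub>m n - P) = (1\<^sub>m n - P) - (P - P * P)"
    using P carrier_matD[OF P] by (simp add: minus_mult_dim mult_minus_dim)
  also have "\<dots> = 1\<^sub>m n - P" using I P by (intro eq_matI) auto
  finally show "(1\<^sub>m n - P) * (1\<^sub>m n - P) = 1\<^sub>m n - P" .
qed

lemma gram_form:
  fixes R Z :: "real mat"
  assumes R: "R \<in> carrier_mat n n" and S: "transpose_mat R = R" and I: "R * R = R"
    and Z: "Z \<in> carrier_mat n t"
  shows "transpose_mat Z * R * Z = transpose_mat (R * Z) * (R * Z)"
proof -
  have "transpose_mat (R * Z) * (R * Z) = transpose_mat Z * (transpose_mat R * R) * Z"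
    using R Z carrier_matD[OF R] carrier_matD[OF Z] by (simp add: transpose_mult_dim assoc_dim del: assoc_mult_mat)
  thus ?thesis using S I by simp
qed

lemma self_scalar_nonneg: "(v :: real vec) \<bullet> v \<ge> 0"
  unfolding scalar_prod_def by (intro sum_nonneg) auto

lemma nnd_gram:
  fixes Z :: "real mat"
  assumes Z: "Z \<in> carrier_mat n t"
  shows "nnd_sym t (transpose_mat Z * Z)"
  unfolding nnd_sym_def
proof (intro conjI ballI)
  show "transpose_mat Z * Z \<in> carrier_mat t t" using Z by simp
  show "transpose_mat (transpose_mat Z * Z) = transpose_mat Z * Z"
    using Z carrier_matD[OF Z] by (simp add: transpose_mult_dim)
  fix v :: "real vec" assume v: "v \<in> carrier_vec t"
  have "v \<bullet> ((transpose_mat Z * Z) *\<^sub>v v) = v \<bullet> (transpose_mat Z *\<^sub>v (Z *\<^sub>v v))"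
    using Z v by simp
  also have "\<dots> = (transpose_mat Z *\<^sub>v (Z *\<^sub>v v)) \<bullet> v"
    using Z v by (intro comm_scalar_prod[of _ t]) auto
  also have "\<dots> = (Z *\<^sub>v v) \<bullet> (Z *\<^sub>v v)"
    using Z v by (intro transpose_vec_mult_scalar[of _ n t]) auto
  finally show "v \<bullet> ((transpose_mat Z * Z) *\<^sub>v v) \<ge> 0" using self_scalar_nonneg by simp
qed

definition mtrace :: "real mat \<Rightarrow> real" where
  "mtrace A = (\<Sum>i<dim_row A. A $$ (i,i))"

lemma mtrace_gram_nonneg:
  fixes Z :: "real mat"
  shows "mtrace (transpose_mat Z * Z) \<ge> 0"
  unfolding mtrace_def by (intro sum_nonneg) (simp add: self_scalar_nonneg)

lemma mtrace_add: "dim_row A = dim_row B \<Longrightarrow> dim_col A = dim_col B \<Longrightarrow> dim_col A = dim_row A \<Longrightarrow> mtrace (A + B) = mtrace A + mtrace B"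
  unfolding mtrace_def by (auto simp: sum.distrib[symmetric] intro!: sum.cong)

lemma trace_ineq:
  fixes P Q Z :: "real mat"
  assumes P: "P \<in> carrier_mat n n" and PS: "transpose_mat P = P" and PI: "P * P = P"
    and Q: "Q \<in> carrier_mat n n" and QS: "transpose_mat Q = Q" and QI: "Q * Q = Q"
    and PQ: "P * Q = Q" and Z: "Z \<in> carrier_mat n t"
  shows "mtrace (transpose_mat Z * (1\<^sub>m n - P) * Z) \<le> mtrace (transpose_mat Z * (1\<^sub>m n - Q) * Z)"
proof -
  define D where "D = P - Q"
  have Dc: "D \<in> carrier_mat n n" unfolding D_def using Q by (simp add: minus_carrier_mat)
  have QP: "Q * P = Q"
  proof -
    have "Q * P = transpose_mat (P * Q)" using P Q PS QS carrier_matD[OF P] carrier_matD[OF Q] by (simp add: transpose_mult_dim)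
    thus ?thesis using PQ QS by simp
  qed
  have DS: "transpose_mat D = D" unfolding D_def using P Q PS QS by (subst transpose_minus_dim) auto
  have "D * D = (P * P - Q * P) - (P * Q - Q * Q)"
    unfolding D_def using P Q carrier_matD[OF P] carrier_matD[OF Q] by (simp add: minus_mult_dim mult_minus_dim minus_carrier_mat)
  also have "\<dots> = D" unfolding D_def PI QP PQ QI using P Q by (intro eq_matI) auto
  finally have DI: "D * D = D" .
  have splitQ: "1\<^sub>m n - Q = (1\<^sub>m n - P) + D" unfolding D_def using P Q by (intro eq_matI) auto
  have "transpose_mat Z * (1\<^sub>m n - Q) * Z = transpose_mat Z * (1\<^sub>m n - P) * Z + transpose_mat Z * D * Z"
    using P Dc Z carrier_matD[OF P] carrier_matD[OF Dc] carrier_matD[OF Z]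
  proof -
    have c1: "1\<^sub>m n - P \<in> carrier_mat n n" using P by (simp add: minus_carrier_mat)
    have "transpose_mat Z * ((1\<^sub>m n - P) + D) = transpose_mat Z * (1\<^sub>m n - P) + transpose_mat Z * D"
      using Z c1 Dc by (intro mult_add_distrib_mat[of _ t n _ n]) auto
    moreover have "(transpose_mat Z * (1\<^sub>m n - P) + transpose_mat Z * D) * Z = transpose_mat Z * (1\<^sub>m n - P) * Z + transpose_mat Z * D * Z"
      using Z c1 Dc by (intro add_mult_distrib_mat[of _ t n]) auto
    ultimately show ?thesis unfolding splitQ by simp
  qed
  hence "mtrace (transpose_mat Z * (1\<^sub>m n - Q) * Z) = mtrace (transpose_mat Z * (1\<^sub>m n - P) * Z) + mtrace (transpose_mat Z * D * Z)"
    using P Dc Z carrier_matD[OF P] carrier_matD[OF Dc] carrier_matD[OF Z] by (simp add: mtrace_add)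
  moreover have "mtrace (transpose_mat Z * D * Z) \<ge> 0"
    using gram_form[OF Dc DS DI Z] mtrace_gram_nonneg by simp
  ultimately show ?thesis by simp
qed

lemma hconcat_carrier: "U \<in> carrier_mat n q \<Longrightarrow> B \<in> carrier_mat n p \<Longrightarrow> hconcat U B \<in> carrier_mat n (q + p)"
  unfolding hconcat_def by simp

lemma hconcat_index: "i < dim_row U \<Longrightarrow> c < dim_col U + dim_col B \<Longrightarrow>
   hconcat U B $$ (i, c) = (if c < dim_col U then U $$ (i, c) else B $$ (i, c - dim_col U))"
  unfolding hconcat_def by simp

lemma hconcat_col_right:
  assumes U: "U \<in> carrier_mat n q" and B: "B \<in> carrier_mat n p" and j: "j < p"
  shows "col (hconcat U B) (q + j) = col B j"
  using U B j by (intro eq_vecI) (auto simp: hconcat_def)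

lemma hconcat_col_left:
  assumes U: "U \<in> carrier_mat n q" and B: "B \<in> carrier_mat n p" and j: "j < q"
  shows "col (hconcat U B) j = col U j"
  using U B j by (intro eq_vecI) (auto simp: hconcat_def)

lemma mult_hconcat_right:
  assumes U: "U \<in> carrier_mat n q" and B: "B \<in> carrier_mat n p" and P: "P \<in> carrier_mat m n"
    and E: "P * hconcat U B = hconcat U B"
  shows "P * B = B"
proof (rule eq_matI)
  fix i j assume i: "i < dim_row B" and j: "j < dim_col B"
  hence i': "i < n" and j': "j < p" using B by auto
  have "(P * hconcat U B) $$ (i, q + j) = hconcat U B $$ (i, q + j)" using E by simp
  moreover have "(P * hconcat U B) $$ (i, q + j) = row P i \<bullet> col B j"
    using hconcat_carrier[OF U B] P i' j' hconcat_col_right[OF U B j'] E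
    by (metis add_less_cancel_left carrier_matD(1) carrier_matD(2) index_mult_mat(1) index_mult_mat(2))
  moreover have "hconcat U B $$ (i, q + j) = B $$ (i, j)" using U B i' j' by (simp add: hconcat_def)
  ultimately show "(P * B) $$ (i, j) = B $$ (i, j)"
    using P B i' j' E hconcat_carrier[OF U B]
    by (metis carrier_matD(1) carrier_matD(2) index_mult_mat(1,2))
next
  have "dim_row (P * hconcat U B) = dim_row (hconcat U B)" using E by simp
  thus "dim_row (P * B) = dim_row B" using P B hconcat_carrier[OF U B] by simp
qed (use P B in auto)

lemma transpose_hconcat_zero:
  fixes U B V :: "real mat"
  assumes U: "U \<in> carrier_mat n q" and B: "B \<in> carrier_mat n p" and V: "V \<in> carrier_mat n t"
    and ZU: "transpose_mat U * V = 0\<^sub>m q t" and ZB: "transpose_mat B * V = 0\<^sub>m p t"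
  shows "transpose_mat (hconcat U B) * V = 0\<^sub>m (q + p) t"
proof (rule eq_matI)
  fix c j assume c: "c < dim_row (0\<^sub>m (q + p) t :: real mat)" and j: "j < dim_col (0\<^sub>m (q + p) t :: real mat)"
  hence c: "c < q + p" and j: "j < t" by auto
  have H: "hconcat U B \<in> carrier_mat n (q + p)" by (rule hconcat_carrier[OF U B])
  have "(transpose_mat (hconcat U B) * V) $$ (c, j) = col (hconcat U B) c \<bullet> col V j"
    using H V c j by simp
  also have "\<dots> = 0"
  proof (cases "c < q")
    case True
    have "col (hconcat U B) c = col U c" by (rule hconcat_col_left[OF U B True])
    moreover have "(transpose_mat U * V) $$ (c, j) = col U c \<bullet> col V j" using U V True j by simp
    ultimately show ?thesis using ZU True j by simp
  next
    case False
    then obtain j' where cj: "c = q + j'" and j': "j' < p" using c by (metis add_diff_inverse_nat add_less_cancel_left)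
    have "col (hconcat U B) c = col B j'" unfolding cj by (rule hconcat_col_right[OF U B j'])
    moreover have "(transpose_mat B * V) $$ (j', j) = col B j' \<bullet> col V j" using B V j' j by simp
    ultimately show ?thesis using ZB j' j by simp
  qed
  finally show "(transpose_mat (hconcat U B) * V) $$ (c, j) = 0\<^sub>m (q + p) t $$ (c, j)" using c j by simp
qed (use U B V in \<open>auto simp: hconcat_def\<close>)

definition onev :: "nat \<Rightarrow> real vec" where "onev n = vec n (\<lambda>_. 1)"

lemma info_analysis:
  fixes X1 U B F Q :: "real mat"
  assumes X1: "X1 \<in> carrier_mat n t" and U: "U \<in> carrier_mat n q" and B: "B \<in> carrier_mat n p"
    and Q: "Q \<in> carrier_mat n n" and QS: "transpose_mat Q = Q" and QI: "Q * Q = Q"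
    and F: "F \<in> carrier_mat p n" and QB: "Q = B * F"
  defines "C \<equiv> transpose_mat X1 * proj_perp (hconcat U B) * X1"
  shows "nnd_sym t C"
    and "mtrace C \<le> mtrace (transpose_mat X1 * (1\<^sub>m n - Q) * X1)"
    and "X1 *\<^sub>v onev t = B *\<^sub>v onev p \<Longrightarrow> C *\<^sub>v onev t = 0\<^sub>v t"
    and "transpose_mat U * ((1\<^sub>m n - Q) * X1) = 0\<^sub>m q t \<Longrightarrow> transpose_mat B * ((1\<^sub>m n - Q) * X1) = 0\<^sub>m p t
         \<Longrightarrow> C = transpose_mat X1 * (1\<^sub>m n - Q) * X1"
proof -
  define X2 where "X2 = hconcat U B"
  have X2: "X2 \<in> carrier_mat n (q + p)" unfolding X2_def by (rule hconcat_carrier[OF U B])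
  define P where "P = proj X2"
  note pp = proj_props[OF X2, folded P_def]
  have PP: "proj_perp X2 = 1\<^sub>m n - P" unfolding proj_perp_def P_def using X2 by simp
  have C: "C = transpose_mat X1 * (1\<^sub>m n - P) * X1" unfolding C_def X2_def[symmetric] PP ..
  have RS: "transpose_mat (1\<^sub>m n - P) = 1\<^sub>m n - P" and RI: "(1\<^sub>m n - P) * (1\<^sub>m n - P) = 1\<^sub>m n - P"
    using compl_props[OF pp(1,3,4)] by auto
  have Rc: "1\<^sub>m n - P \<in> carrier_mat n n" using pp(1) by (simp add: minus_carrier_mat)
  define Z where "Z = (1\<^sub>m n - P) * X1"
  have Zc: "Z \<in> carrier_mat n t" unfolding Z_def using Rc X1 by simp
  have CZ: "C = transpose_mat Z * Z" unfolding C Z_def by (rule gram_form[OF Rc RS RI X1])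
  show "nnd_sym t C" unfolding CZ by (rule nnd_gram[OF Zc])
  have PB: "P * B = B" using mult_hconcat_right[OF U B pp(1)] pp(2) unfolding X2_def by simp
  have PQ: "P * Q = Q" unfolding QB using PB pp(1) B F by (simp add: assoc_dim[symmetric] carrier_matD del: assoc_mult_mat)
  show "mtrace C \<le> mtrace (transpose_mat X1 * (1\<^sub>m n - Q) * X1)"
    unfolding C by (rule trace_ineq[OF pp(1,3,4) Q QS QI PQ X1])
  have RB: "(1\<^sub>m n - P) * B = 0\<^sub>m n p"
  proof -
    have "(1\<^sub>m n - P) * B = B - P * B" using pp(1) B by (simp add: minus_mult_dim carrier_matD)
    thus ?thesis unfolding PB using B by simp
  qed
  show "C *\<^sub>v onev t = 0\<^sub>v t" if H: "X1 *\<^sub>v onev t = B *\<^sub>v onev p"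
  proof -
    have o: "onev t \<in> carrier_vec t" "onev p \<in> carrier_vec p" unfolding onev_def by auto
    have "Z *\<^sub>v onev t = (1\<^sub>m n - P) *\<^sub>v (B *\<^sub>v onev p)"
      unfolding Z_def using Rc X1 o H by simp
    also have "\<dots> = ((1\<^sub>m n - P) * B) *\<^sub>v onev p" using Rc B o by simp
    also have "\<dots> = 0\<^sub>v n" unfolding RB using o by (intro eq_vecI) (auto simp: scalar_prod_def)
    finally have "Z *\<^sub>v onev t = 0\<^sub>v n" .
    hence "C *\<^sub>v onev t = transpose_mat Z *\<^sub>v 0\<^sub>v n" unfolding CZ using Zc o by simp
    thus ?thesis using Zc by (intro eq_vecI) (auto simp: scalar_prod_def)
  qed
  assume ZU: "transpose_mat U * ((1\<^sub>m n - Q) * X1) = 0\<^sub>m q t"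
    and ZB: "transpose_mat B * ((1\<^sub>m n - Q) * X1) = 0\<^sub>m p t"
  define V where "V = (1\<^sub>m n - Q) * X1"
  have Vc: "V \<in> carrier_mat n t" unfolding V_def by (rule mult_carrier_mat[OF minus_carrier_mat[OF Q] X1])
  have X2V: "transpose_mat X2 * V = 0\<^sub>m (q + p) t"
    unfolding X2_def V_def by (rule transpose_hconcat_zero[OF U B _ ZU ZB]) (rule mult_carrier_mat[OF minus_carrier_mat[OF Q] X1])
  define Y where "Y = mp_inverse (transpose_mat X2 * X2)"
  have PY: "P = X2 * Y * transpose_mat X2" unfolding P_def proj_def Y_def ..
  have Yc: "Y \<in> carrier_mat (q + p) (q + p)"
  proof -
    have G: "transpose_mat X2 * X2 \<in> carrier_mat (q+p) (q+p)" using X2 by simp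
    have "transpose_mat (transpose_mat X2 * X2) = transpose_mat X2 * X2" using X2 by (simp add: transpose_mult_dim carrier_matD)
    from mp_penrose_sym[OF G this] show ?thesis unfolding Y_def penrose_def using G X2 by (simp add: carrier_matD)
  qed
  have PV: "P * V = 0\<^sub>m n t"
  proof -
    have "P * V = X2 * Y * (transpose_mat X2 * V)" unfolding PY using X2 Yc Vc
      by (simp add: assoc_dim carrier_matD del: assoc_mult_mat)
    thus ?thesis unfolding X2V using X2 Yc by simp
  qed
  have X1s: "X1 = V + Q * X1" unfolding V_def using Q X1 by (intro eq_matI) (auto simp: minus_mult_dim carrier_matD)
  have "P * X1 = P * V + P * Q * X1"
  proof -
    have "P * (V + Q * X1) = P * V + P * (Q * X1)" using pp(1) Vc Q X1 by (intro mult_add_distrib_mat[of _ n n _ t]) auto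
    thus ?thesis using X1s pp(1) Q X1 by (simp add: carrier_matD)
  qed
  hence PX1: "P * X1 = Q * X1" unfolding PV PQ using Q X1 by simp
  have "(1\<^sub>m n - P) * X1 = X1 - Q * X1" using pp(1) X1 PX1 by (simp add: minus_mult_dim carrier_matD)
  also have "\<dots> = (1\<^sub>m n - Q) * X1" using Q X1 by (simp add: minus_mult_dim carrier_matD)
  finally have "(1\<^sub>m n - P) * X1 = (1\<^sub>m n - Q) * X1" .
  thus "C = transpose_mat X1 * (1\<^sub>m n - Q) * X1" unfolding C using X1 pp(1) Q
    by (simp add: assoc_dim carrier_matD minus_carrier_mat del: assoc_mult_mat)
qed

definition csym :: "nat \<Rightarrow> real mat \<Rightarrow> bool" where
  "csym t C \<longleftrightarrow> C \<in> carrier_mat t t \<and> (\<forall>i<t. \<forall>j<t. C $$ (i,i) = C $$ (j,j)) \<and>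
     (\<forall>i j i' j'. i < t \<longrightarrow> j < t \<longrightarrow> i' < t \<longrightarrow> j' < t \<longrightarrow> i \<noteq> j \<longrightarrow> i' \<noteq> j' \<longrightarrow> C $$ (i,j) = C $$ (i',j'))"

definition zrs :: "nat \<Rightarrow> real mat \<Rightarrow> bool" where
  "zrs t C \<longleftrightarrow> (\<forall>i<t. (\<Sum>j<t. C $$ (i,j)) = 0)"

lemma csym_entries:
  assumes cs: "csym t A" and z: "zrs t A" and t: "2 \<le> t"
  shows "\<And>i. i < t \<Longrightarrow> A $$ (i,i) = mtrace A / t"
    and "\<And>i j. i < t \<Longrightarrow> j < t \<Longrightarrow> i \<noteq> j \<Longrightarrow> A $$ (i,j) = - mtrace A / (t * (t - 1))"
proof -
  have D: "\<forall>i<t. \<forall>j<t. A $$ (i,i) = A $$ (j,j)" and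
    O: "\<forall>i j i' j'. i < t \<longrightarrow> j < t \<longrightarrow> i' < t \<longrightarrow> j' < t \<longrightarrow> i \<noteq> j \<longrightarrow> i' \<noteq> j' \<longrightarrow> A $$ (i,j) = A $$ (i',j')"
    and Ac: "A \<in> carrier_mat t t" using cs unfolding csym_def by blast+
  have dA: "dim_row A = t" using Ac by simp
  define \<alpha> where "\<alpha> = A $$ (0,0)"
  define \<beta> where "\<beta> = A $$ (0,1)"
  have t0: "0 < t" "1 < t" using t by auto
  have diag: "A $$ (i,i) = \<alpha>" if "i < t" for i using D[rule_format, OF that t0(1)] unfolding \<alpha>_def .
  have off: "A $$ (i,j) = \<beta>" if "i < t" "j < t" "i \<noteq> j" for i j
    using O[rule_format, OF that(1,2) t0(1,2) that(3)] unfolding \<beta>_def by simp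
  have tr: "mtrace A = t * \<alpha>" unfolding mtrace_def dA using diag by simp
  obtain t' where t': "t = Suc t'" using t by (cases t) auto
  have "(\<Sum>j<t. A $$ (0,j)) = A $$ (0,0) + (\<Sum>j<t'. A $$ (0, Suc j))"
    unfolding t' by (rule sum.lessThan_Suc_shift)
  also have "\<dots> = \<alpha> + t' * \<beta>" using off t' unfolding \<alpha>_def by simp
  finally have "\<alpha> + t' * \<beta> = 0" using z t' unfolding zrs_def by auto
  hence b: "\<beta> = - \<alpha> / t'" using t t' by (simp add: field_simps)
  show "A $$ (i,i) = mtrace A / t" if "i < t" for i using diag[OF that] tr t by simp
  show "A $$ (i,j) = - mtrace A / (t * (t - 1))" if "i < t" "j < t" "i \<noteq> j" for i j
  proof -
    have tz: "real t \<noteq> 0" using t by simp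
    have "mtrace A / (t * (t - 1)) = (t * \<alpha>) / (t * t')" using tr t' by simp
    also have "\<dots> = \<alpha> / t'" using tz by simp
    finally have "mtrace A / (t * (t - 1)) = \<alpha> / t'" .
    thus ?thesis using off[OF that] b by (simp add: minus_divide_left[symmetric])
  qed
qed

lemma csym_eq:
  assumes "csym t A" "zrs t A" "csym t B" "zrs t B" "mtrace A = mtrace B" "2 \<le> t"
  shows "A = B"
proof (rule eq_matI)
  show "dim_row A = dim_row B" "dim_col A = dim_col B" using assms(1,3) unfolding csym_def by auto
  fix i j assume "i < dim_row B" "j < dim_col B"
  hence ij: "i < t" "j < t" using assms(3) unfolding csym_def by auto
  show "A $$ (i,j) = B $$ (i,j)"
    using csym_entries[OF assms(1,2,6)] csym_entries[OF assms(3,4,6)] ij assms(5)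
    by (cases "i = j") auto
qed

lemma quad_form:
  assumes M: "M \<in> carrier_mat t t" and v: "v \<in> carrier_vec t"
  shows "v \<bullet> (M *\<^sub>v v) = (\<Sum>i<t. \<Sum>j<t. v $ i * M $$ (i,j) * v $ j)"
  using M v by (simp add: scalar_prod_def sum_distrib_left lessThan_atLeast0 mult.assoc)

lemma nnd_comb:
  assumes A: "nnd_sym t A" and B: "nnd_sym t B" and u: "0 \<le> u" "u \<le> 1"
  shows "nnd_sym t (u \<cdot>\<^sub>m A + (1 - u) \<cdot>\<^sub>m B)"
proof -
  note a = A[unfolded nnd_sym_def] and b = B[unfolded nnd_sym_def]
  have Ac: "A \<in> carrier_mat t t" and Bc: "B \<in> carrier_mat t t" using a b by auto
  show ?thesis unfolding nnd_sym_def
  proof (intro conjI ballI)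
    show "u \<cdot>\<^sub>m A + (1 - u) \<cdot>\<^sub>m B \<in> carrier_mat t t" using Ac Bc by simp
    show "transpose_mat (u \<cdot>\<^sub>m A + (1 - u) \<cdot>\<^sub>m B) = u \<cdot>\<^sub>m A + (1 - u) \<cdot>\<^sub>m B"
    proof (rule eq_matI)
      fix i j assume "i < dim_row (u \<cdot>\<^sub>m A + (1 - u) \<cdot>\<^sub>m B)" "j < dim_col (u \<cdot>\<^sub>m A + (1 - u) \<cdot>\<^sub>m B)"
      hence ij: "i < t" "j < t" using Ac Bc by auto
      have "A $$ (j,i) = A $$ (i,j)" using a ij by (metis carrier_matD index_transpose_mat(1))
      moreover have "B $$ (j,i) = B $$ (i,j)" using b ij by (metis carrier_matD index_transpose_mat(1))
      ultimately show "transpose_mat (u \<cdot>\<^sub>m A + (1 - u) \<cdot>\<^sub>m B) $$ (i, j) = (u \<cdot>\<^sub>m A + (1 - u) \<cdot>\<^sub>m B) $$ (i, j)"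
        using ij Ac Bc by simp
    qed (use Ac Bc in auto)
    fix v :: "real vec" assume v: "v \<in> carrier_vec t"
    have "v \<bullet> ((u \<cdot>\<^sub>m A + (1 - u) \<cdot>\<^sub>m B) *\<^sub>v v) = (\<Sum>i<t. \<Sum>j<t. v $ i * (u * A $$ (i,j) + (1-u) * B $$ (i,j)) * v $ j)"
      using Ac Bc v by (subst quad_form[of _ t]) (auto intro!: sum.cong)
    also have "\<dots> = u * (\<Sum>i<t. \<Sum>j<t. v $ i * A $$ (i,j) * v $ j) + (1 - u) * (\<Sum>i<t. \<Sum>j<t. v $ i * B $$ (i,j) * v $ j)"
      by (simp add: sum_distrib_left sum.distrib[symmetric] algebra_simps)
    also have "\<dots> = u * (v \<bullet> (A *\<^sub>v v)) + (1 - u) * (v \<bullet> (B *\<^sub>v v))"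
      using Ac Bc v by (simp add: quad_form)
    also have "\<dots> \<ge> 0" using a b v u by (intro add_nonneg_nonneg mult_nonneg_nonneg) auto
    finally show "v \<bullet> ((u \<cdot>\<^sub>m A + (1 - u) \<cdot>\<^sub>m B) *\<^sub>v v) \<ge> 0" .
  qed
qed

definition lavg :: "nat \<Rightarrow> real mat list \<Rightarrow> real mat" where
  "lavg t Cs = mat t t (\<lambda>(i,j). (\<Sum>C\<leftarrow>Cs. C $$ (i,j)) / length Cs)"

lemma ereal_comb_le:
  assumes "x \<le> v" "y \<le> v" "0 \<le> u" "u \<le> 1"
  shows "ereal u * x + ereal (1 - u) * y \<le> v"
proof -
  have "ereal u * x + ereal (1 - u) * y \<le> ereal u * v + ereal (1 - u) * v"
    using assms by (intro add_mono ereal_mult_left_mono) auto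
  also have "\<dots> = v"
  proof (cases v)
    case (real r) thus ?thesis by (simp add: algebra_simps)
  next
    case PInf thus ?thesis using assms by (cases "u = 0"; cases "u = 1") auto
  next
    case MInf thus ?thesis using assms by (cases "u = 0"; cases "u = 1") auto
  qed
  finally show ?thesis .
qed

lemma jensen:
  assumes K: "kiefer_criterion t \<Phi>"
  shows "Cs \<noteq> [] \<Longrightarrow> (\<forall>C\<in>set Cs. nnd_sym t C \<and> \<Phi> C \<le> v) \<Longrightarrow> nnd_sym t (lavg t Cs) \<and> \<Phi> (lavg t Cs) \<le> v"
proof (induction Cs)
  case Nil thus ?case by simp
next
  case (Cons C Cs)
  have Cc: "C \<in> carrier_mat t t" using Cons.prems unfolding nnd_sym_def by auto
  show ?case
  proof (cases "Cs = []")
    case True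
    have "lavg t [C] = C" unfolding lavg_def using Cc by (intro eq_matI) auto
    thus ?thesis using Cons.prems True by simp
  next
    case False
    note IH = Cons.IH[OF False]
    have ih: "nnd_sym t (lavg t Cs)" "\<Phi> (lavg t Cs) \<le> v" using IH Cons.prems by auto
    define n where "n = length Cs"
    have n: "n > 0" using False unfolding n_def by simp
    define u :: real where "u = real n / (real n + 1)"
    have u: "0 < u" "u < 1" unfolding u_def using n by auto
    have eq: "lavg t (C # Cs) = u \<cdot>\<^sub>m lavg t Cs + (1 - u) \<cdot>\<^sub>m C"
    proof (rule eq_matI)
      fix i j assume "i < dim_row (u \<cdot>\<^sub>m lavg t Cs + (1 - u) \<cdot>\<^sub>m C)" "j < dim_col (u \<cdot>\<^sub>m lavg t Cs + (1 - u) \<cdot>\<^sub>m C)"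
      hence ij: "i < t" "j < t" using Cc unfolding lavg_def by auto
      have u1: "1 - u = 1 / (real n + 1)" unfolding u_def using n by (simp add: field_simps)
      have ar: "(c + S) / (L + 1) = L / (L + 1) * (S / L) + (1 / (L + 1)) * c" if "L > 0" for c S L :: real
      proof -
        have "L \<noteq> 0" using that by auto
        hence "L / (L + 1) * (S / L) = S / (L + 1)" by simp
        thus ?thesis by (simp add: add_divide_distrib)
      qed
      have "lavg t (C # Cs) $$ (i, j) = (C $$ (i,j) + (\<Sum>C\<leftarrow>Cs. C $$ (i, j))) / (real n + 1)"
        using ij unfolding lavg_def n_def by simp
      also have "\<dots> = u * ((\<Sum>C\<leftarrow>Cs. C $$ (i, j)) / n) + (1 - u) * C $$ (i,j)"
        unfolding u1 unfolding u_def by (rule ar) (use n in simp)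
      also have "\<dots> = (u \<cdot>\<^sub>m lavg t Cs + (1 - u) \<cdot>\<^sub>m C) $$ (i, j)"
        using ij Cc unfolding lavg_def n_def by simp
      finally show "lavg t (C # Cs) $$ (i, j) = (u \<cdot>\<^sub>m lavg t Cs + (1 - u) \<cdot>\<^sub>m C) $$ (i, j)" .
    qed (use Cc in \<open>auto simp: lavg_def\<close>)
    have "nnd_sym t (lavg t (C # Cs))" unfolding eq using nnd_comb[OF ih(1), of C u] Cons.prems u by simp
    moreover have "\<Phi> (lavg t (C # Cs)) \<le> v"
    proof -
      have "\<Phi> (lavg t (C # Cs)) \<le> ereal u * \<Phi> (lavg t Cs) + ereal (1 - u) * \<Phi> C"
        unfolding eq using K[unfolded kiefer_criterion_def] ih(1) Cons.prems u by auto
      also have "\<dots> \<le> v" using ih(2) Cons.prems u by (intro ereal_comb_le) auto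
      finally show ?thesis .
    qed
    ultimately show ?thesis by simp
  qed
qed

definition permm :: "nat \<Rightarrow> real mat \<Rightarrow> (nat \<Rightarrow> nat) \<Rightarrow> real mat" where
  "permm t C p = mat t t (\<lambda>(i,j). C $$ (p i, p j))"

lemma sum_perm: "p permutes {..<t} \<Longrightarrow> (\<Sum>i<t. f (p i)) = (\<Sum>i<t. (f i :: real))"
  using sum.permute[of p "{..<t}" f] by (simp add: comp_def)

lemma permm_nnd:
  assumes C: "nnd_sym t C" and p: "p permutes {..<t}"
  shows "nnd_sym t (permm t C p)"
proof -
  note c = C[unfolded nnd_sym_def]
  have Cc: "C \<in> carrier_mat t t" using c by auto
  have pt: "p i < t" if "i < t" for i using permutes_in_image[OF p, of i] that by simp
  have Csym: "C $$ (a, b) = C $$ (b, a)" if "a < t" "b < t" for a b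
    using c that by (metis carrier_matD index_transpose_mat(1))
  show ?thesis unfolding nnd_sym_def
  proof (intro conjI ballI)
    show "permm t C p \<in> carrier_mat t t" unfolding permm_def by simp
    show "transpose_mat (permm t C p) = permm t C p"
      by (rule eq_matI) (auto simp: permm_def pt Csym)
    fix v :: "real vec" assume v: "v \<in> carrier_vec t"
    define w where "w = vec t (\<lambda>a. v $ inv_into UNIV p a)"
    have w: "w \<in> carrier_vec t" unfolding w_def by simp
    have vw: "v $ i = w $ (p i)" if "i < t" for i
      unfolding w_def using pt[OF that] permutes_inverses(2)[OF p] by simp
    have "v \<bullet> (permm t C p *\<^sub>v v) = (\<Sum>i<t. \<Sum>j<t. v $ i * C $$ (p i, p j) * v $ j)"
      using v by (subst quad_form[of _ t]) (auto simp: permm_def intro!: sum.cong)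
    also have "\<dots> = (\<Sum>i<t. \<Sum>j<t. w $ (p i) * C $$ (p i, p j) * w $ (p j))"
      by (intro sum.cong refl) (simp add: vw)
    also have "\<dots> = (\<Sum>i<t. \<Sum>j<t. w $ (p i) * C $$ (p i, j) * w $ j)"
    proof (rule sum.cong[OF refl])
      fix i show "(\<Sum>j<t. w $ (p i) * C $$ (p i, p j) * w $ (p j)) = (\<Sum>j<t. w $ (p i) * C $$ (p i, j) * w $ j)"
        by (rule sum_perm[OF p, of "\<lambda>j. w $ (p i) * C $$ (p i, j) * w $ j"])
    qed
    also have "\<dots> = (\<Sum>i<t. \<Sum>j<t. w $ i * C $$ (i, j) * w $ j)"
      by (rule sum_perm[OF p, of "\<lambda>i. \<Sum>j<t. w $ i * C $$ (i, j) * w $ j"])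
    also have "\<dots> = w \<bullet> (C *\<^sub>v w)" using Cc w by (simp add: quad_form)
    also have "\<dots> \<ge> 0" using c w by auto
    finally show "v \<bullet> (permm t C p *\<^sub>v v) \<ge> 0" .
  qed
qed

definition Perms :: "nat \<Rightarrow> (nat \<Rightarrow> nat) set" where
  "Perms t = {p. p permutes {..<t}}"

definition Gsum :: "nat \<Rightarrow> real mat \<Rightarrow> nat \<Rightarrow> nat \<Rightarrow> real" where
  "Gsum t C i j = (\<Sum>p\<in>Perms t. C $$ (p i, p j))"

lemma Gsum_inv:
  assumes s: "s permutes {..<t}"
  shows "Gsum t C (s i) (s j) = Gsum t C i j"
proof -
  have bij: "bij_betw (\<lambda>p. p \<circ> s) (Perms t) (Perms t)"
  proof (rule bij_betw_byWitness[where f' = "\<lambda>q. q \<circ> inv_into UNIV s"])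
    show "\<forall>a\<in>Perms t. a \<circ> s \<circ> inv_into UNIV s = a" using permutes_inv_o(1)[OF s] by (simp add: o_assoc[symmetric])
    show "\<forall>a\<in>Perms t. a \<circ> inv_into UNIV s \<circ> s = a" using permutes_inv_o(2)[OF s] by (simp add: o_assoc[symmetric])
    show "(\<lambda>p. p \<circ> s) ` Perms t \<subseteq> Perms t" unfolding Perms_def using s by (auto intro: permutes_compose)
    show "(\<lambda>q. q \<circ> inv_into UNIV s) ` Perms t \<subseteq> Perms t" unfolding Perms_def using permutes_inv[OF s] by (auto intro: permutes_compose)
  qed
  have "Gsum t C i j = (\<Sum>p\<in>Perms t. (\<lambda>q. C $$ (q i, q j)) (p \<circ> s))"
    unfolding Gsum_def by (rule sum.reindex_bij_betw[OF bij, symmetric])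
  thus ?thesis unfolding Gsum_def by simp
qed

lemma finite_Perms: "finite (Perms t)"
  unfolding Perms_def using finite_permutations[of "{..<t}"] by simp

lemma Gsum_csym:
  assumes t: "2 \<le> t"
  shows "csym t (mat t t (\<lambda>(i,j). Gsum t C i j / N))"
  unfolding csym_def
proof (intro conjI allI impI)
  show "mat t t (\<lambda>(i,j). Gsum t C i j / N) \<in> carrier_mat t t" by simp
  have t0: "0 < t" "1 < t" using t by auto
  have d: "Gsum t C i i = Gsum t C 0 0" if i: "i < t" for i
  proof -
    have "Gsum t C (Transposition.transpose 0 i 0) (Transposition.transpose 0 i 0) = Gsum t C 0 0"
      by (rule Gsum_inv) (rule permutes_swap_id, use i t0 in auto)
    thus ?thesis by simp
  qed
  fix i j assume i: "i < t" and j: "j < t"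
  have "Gsum t C i i = Gsum t C j j" using d[OF i] d[OF j] by simp
  thus "mat t t (\<lambda>(i,j). Gsum t C i j / N) $$ (i, i) = mat t t (\<lambda>(i,j). Gsum t C i j / N) $$ (j, j)"
    using i j by simp
next
  have t0: "0 < t" "1 < t" using t by auto
  have o: "Gsum t C i j = Gsum t C 0 1" if i: "i < t" and j: "j < t" and ij: "i \<noteq> j" for i j
  proof -
    define \<tau> where "\<tau> = Transposition.transpose 0 i"
    define \<sigma> where "\<sigma> = Transposition.transpose j (\<tau> 1) \<circ> \<tau>"
    have tp: "\<tau> permutes {..<t}" unfolding \<tau>_def by (rule permutes_swap_id) (use i t0 in auto)
    have t1: "\<tau> 1 < t" using permutes_in_image[OF tp] t0 by auto
    have sp: "\<sigma> permutes {..<t}" unfolding \<sigma>_def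
      by (rule permutes_compose[OF tp]) (rule permutes_swap_id, use j t1 in auto)
    have tau0: "\<tau> 0 = i" unfolding \<tau>_def by (rule transpose_apply_first)
    have tau1: "\<tau> 1 \<noteq> i"
    proof (cases "i = 1")
      case True thus ?thesis unfolding \<tau>_def by simp
    next
      case False
      hence "\<tau> 1 = 1" unfolding \<tau>_def by (intro transpose_apply_other) auto
      thus ?thesis using False by simp
    qed
    have s0: "\<sigma> 0 = i" unfolding \<sigma>_def using tau0 tau1 ij by (simp add: transpose_apply_other)
    have s1: "\<sigma> 1 = j" unfolding \<sigma>_def by (simp add: transpose_apply_second)
    have "Gsum t C (\<sigma> 0) (\<sigma> 1) = Gsum t C 0 1" by (rule Gsum_inv[OF sp])
    thus ?thesis using s0 s1 by simp
  qed
  fix i j i' j' assume a: "i < t" "j < t" "i' < t" "j' < t" "i \<noteq> j" "i' \<noteq> j'"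
  have "Gsum t C i j = Gsum t C i' j'" using o[of i j] o[of i' j'] a by simp
  thus "mat t t (\<lambda>(i,j). Gsum t C i j / N) $$ (i, j) = mat t t (\<lambda>(i,j). Gsum t C i j / N) $$ (i', j')"
    using a by simp
qed

lemma Gsum_zrs:
  assumes z: "zrs t C"
  shows "zrs t (mat t t (\<lambda>(i,j). Gsum t C i j / N))"
  unfolding zrs_def
proof (intro allI impI)
  fix i assume i: "i < t"
  have "(\<Sum>j<t. Gsum t C i j) = (\<Sum>p\<in>Perms t. \<Sum>j<t. C $$ (p i, p j))"
    unfolding Gsum_def by (rule sum.swap)
  also have "\<dots> = (\<Sum>p\<in>Perms t. \<Sum>j<t. C $$ (p i, j))"
  proof (rule sum.cong[OF refl])
    fix p assume "p \<in> Perms t"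
    thus "(\<Sum>j<t. C $$ (p i, p j)) = (\<Sum>j<t. C $$ (p i, j))"
      by (intro sum_perm[of p t "\<lambda>j. C $$ (p i, j)"]) (simp add: Perms_def)
  qed
  also have "\<dots> = 0"
  proof (rule sum.neutral, rule ballI)
    fix p assume "p \<in> Perms t"
    hence "p i < t" using i permutes_in_image[of p "{..<t}" i] unfolding Perms_def by simp
    thus "(\<Sum>j<t. C $$ (p i, j)) = 0" using z unfolding zrs_def by simp
  qed
  finally have "(\<Sum>j<t. Gsum t C i j) = 0" .
  hence "(\<Sum>j<t. Gsum t C i j / N) = 0" by (simp add: sum_divide_distrib[symmetric])
  thus "(\<Sum>j<t. mat t t (\<lambda>(i,j). Gsum t C i j / N) $$ (i, j)) = 0" using i by simp
qed

lemma Gsum_trace: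
  assumes C: "C \<in> carrier_mat t t"
  shows "(\<Sum>i<t. Gsum t C i i) = card (Perms t) * mtrace C"
proof -
  have "(\<Sum>i<t. Gsum t C i i) = (\<Sum>p\<in>Perms t. \<Sum>i<t. C $$ (p i, p i))"
    unfolding Gsum_def by (rule sum.swap)
  also have "\<dots> = (\<Sum>p\<in>Perms t. mtrace C)"
  proof (rule sum.cong[OF refl])
    fix p assume "p \<in> Perms t"
    hence "(\<Sum>i<t. C $$ (p i, p i)) = (\<Sum>i<t. C $$ (i, i))"
      by (intro sum_perm[of p t "\<lambda>i. C $$ (i, i)"]) (simp add: Perms_def)
    thus "(\<Sum>i<t. C $$ (p i, p i)) = mtrace C" unfolding mtrace_def using C by simp
  qed
  finally show ?thesis by simp
qed

lemma kiefer_main: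
  assumes t: "2 \<le> t" and K: "kiefer_criterion t \<Phi>"
    and cs: "csym t Cs" and zs: "zrs t Cs" and ns: "nnd_sym t Cs" and ts: "mtrace Cs > 0"
    and nc: "nnd_sym t C" and zc: "zrs t C" and tc0: "mtrace C \<ge> 0" and tc: "mtrace C \<le> mtrace Cs"
  shows "\<Phi> Cs \<le> \<Phi> C"
proof -
  note k = K[unfolded kiefer_criterion_def]
  note k3 = k[THEN conjunct2, THEN conjunct2, THEN conjunct1]
  note k4 = k[THEN conjunct2, THEN conjunct2, THEN conjunct2]
  have Cc: "C \<in> carrier_mat t t" and Csc: "Cs \<in> carrier_mat t t" using nc ns unfolding nnd_sym_def by auto
  obtain ps where ps: "set ps = Perms t" "distinct ps" using finite_distinct_list[OF finite_Perms] by blast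
  have idp: "id \<in> Perms t" unfolding Perms_def by (simp add: permutes_id)
  define Ls where "Ls = map (permm t C) ps"
  have Lne: "Ls \<noteq> []" unfolding Ls_def using ps idp by auto
  have Lall: "\<forall>M\<in>set Ls. nnd_sym t M \<and> \<Phi> M \<le> \<Phi> C"
  proof
    fix M assume "M \<in> set Ls"
    then obtain p where p: "p permutes {..<t}" and M: "M = permm t C p" unfolding Ls_def using ps by (auto simp: Perms_def)
    have "\<Phi> M = \<Phi> C" unfolding M permm_def using k4[rule_format, OF nc p] .
    thus "nnd_sym t M \<and> \<Phi> M \<le> \<Phi> C" unfolding M using permm_nnd[OF nc p] by simp
  qed
  have J: "\<Phi> (lavg t Ls) \<le> \<Phi> C" using jensen[OF K Lne Lall] by simp
  define N where "N = real (card (Perms t))"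
  have lenN: "real (length Ls) = N" unfolding Ls_def N_def using ps distinct_card by (metis length_map)
  have "card (Perms t) > 0" using idp finite_Perms card_gt_0_iff by blast
  hence Npos: "N > 0" unfolding N_def by simp
  have LG: "lavg t Ls = mat t t (\<lambda>(i,j). Gsum t C i j / N)"
  proof (rule eq_matI)
    fix i j assume "i < dim_row (mat t t (\<lambda>(i,j). Gsum t C i j / N))" "j < dim_col (mat t t (\<lambda>(i,j). Gsum t C i j / N))"
    hence ij: "i < t" "j < t" by auto
    have "(\<Sum>M\<leftarrow>Ls. M $$ (i,j)) = (\<Sum>p\<leftarrow>ps. C $$ (p i, p j))"
      unfolding Ls_def using ij by (simp add: permm_def comp_def)
    also have "\<dots> = Gsum t C i j" unfolding Gsum_def using ps by (simp add: sum_list_distinct_conv_sum_set)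
    finally show "lavg t Ls $$ (i, j) = mat t t (\<lambda>(i,j). Gsum t C i j / N) $$ (i, j)"
      unfolding lavg_def using ij lenN by simp
  qed (auto simp: lavg_def)
  define r where "r = mtrace C / mtrace Cs"
  have r: "0 \<le> r" "r \<le> 1" unfolding r_def using ts tc0 tc by (auto simp: field_simps)
  have csr: "csym t (r \<cdot>\<^sub>m Cs)"
  proof -
    have D: "\<forall>i<t. \<forall>j<t. Cs $$ (i,i) = Cs $$ (j,j)" and
      O: "\<forall>i j i' j'. i < t \<longrightarrow> j < t \<longrightarrow> i' < t \<longrightarrow> j' < t \<longrightarrow> i \<noteq> j \<longrightarrow> i' \<noteq> j' \<longrightarrow> Cs $$ (i,j) = Cs $$ (i',j')"
      using cs unfolding csym_def by blast+
    show ?thesis unfolding csym_def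
    proof (intro conjI allI impI)
      show "r \<cdot>\<^sub>m Cs \<in> carrier_mat t t" using Csc by simp
      fix i j assume ij: "i < t" "j < t"
      show "(r \<cdot>\<^sub>m Cs) $$ (i, i) = (r \<cdot>\<^sub>m Cs) $$ (j, j)" using ij Csc D[rule_format, OF ij] by simp
    next
      fix i j i' j' assume ij: "i < t" "j < t" "i' < t" "j' < t" "i \<noteq> j" "i' \<noteq> j'"
      show "(r \<cdot>\<^sub>m Cs) $$ (i, j) = (r \<cdot>\<^sub>m Cs) $$ (i', j')" using ij Csc O[rule_format, OF ij] by simp
    qed
  qed
  have zsr: "zrs t (r \<cdot>\<^sub>m Cs)" using zs Csc unfolding zrs_def by (auto simp: sum_distrib_left[symmetric])
  have trr: "mtrace (r \<cdot>\<^sub>m Cs) = mtrace C"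
  proof -
    have "mtrace (r \<cdot>\<^sub>m Cs) = r * mtrace Cs" unfolding mtrace_def using Csc by (simp add: sum_distrib_left)
    thus ?thesis unfolding r_def using ts by simp
  qed
  have trL: "mtrace (mat t t (\<lambda>(i,j). Gsum t C i j / N)) = mtrace C"
  proof -
    have "mtrace (mat t t (\<lambda>(i,j). Gsum t C i j / N)) = (\<Sum>i<t. Gsum t C i i) / N"
      unfolding mtrace_def by (simp add: sum_divide_distrib)
    also have "\<dots> = mtrace C" unfolding Gsum_trace[OF Cc] N_def[symmetric] using Npos by simp
    finally show ?thesis .
  qed
  have eqL: "lavg t Ls = r \<cdot>\<^sub>m Cs"
    unfolding LG by (rule csym_eq[OF Gsum_csym[OF t] Gsum_zrs[OF zc] csr zsr _ t]) (simp add: trL trr)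
  have "\<Phi> (1 \<cdot>\<^sub>m Cs) \<le> \<Phi> (r \<cdot>\<^sub>m Cs)" using k3[rule_format, OF ns r(1) r(2)] .
  moreover have "1 \<cdot>\<^sub>m Cs = Cs" using Csc by (intro eq_matI) auto
  ultimately show ?thesis using J eqL by simp
qed

lemma sum_lessThan_add: fixes k m :: nat and h :: "nat \<Rightarrow> 'a :: comm_monoid_add"
  shows "(\<Sum>r<m + k. h r) = (\<Sum>r<m. h r) + (\<Sum>j<k. h (m + j))"
  by (induction k) (simp_all add: add.assoc)

lemma sum_blocks: fixes b k :: nat and h :: "nat \<Rightarrow> 'a :: comm_monoid_add"
  shows "(\<Sum>r<b * k. h r) = (\<Sum>i<b. \<Sum>j<k. h (i * k + j))"
proof (induction b)
  case (Suc b)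
  have "(\<Sum>r<Suc b * k. h r) = (\<Sum>r<b * k + k. h r)" by (simp add: add.commute)
  also have "\<dots> = (\<Sum>r<b * k. h r) + (\<Sum>j<k. h (b * k + j))" by (rule sum_lessThan_add)
  finally show ?case using Suc by simp
qed simp

definition ind :: "nat \<Rightarrow> nat \<Rightarrow> real" where "ind x c = (if x = Suc c then 1 else 0)"

definition uu :: "nat \<Rightarrow> (nat \<Rightarrow> nat \<Rightarrow> nat) \<Rightarrow> nat \<Rightarrow> nat" where
  "uu k d r = d (r div k + 1) (r mod k)"
definition vv :: "nat \<Rightarrow> (nat \<Rightarrow> nat \<Rightarrow> nat) \<Rightarrow> nat \<Rightarrow> nat" where
  "vv k d r = d (r div k + 1) (r mod k + 1)"
definition ww :: "nat \<Rightarrow> (nat \<Rightarrow> nat \<Rightarrow> nat) \<Rightarrow> nat \<Rightarrow> nat" where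
  "ww k d r = d (r div k + 1) (r mod k + 2)"

lemma block_idx: fixes i j k :: nat
  shows "j < k \<Longrightarrow> (i * k + j) div k = i" "j < k \<Longrightarrow> (i * k + j) mod k = j"
  by simp_all

lemma shift_block:
  fixes d :: "nat \<Rightarrow> nat \<Rightarrow> nat" and k :: nat and g :: "nat \<Rightarrow> nat \<Rightarrow> real"
  assumes c: "d i 0 = d i k" "d i (k+1) = d i 1"
  shows "(\<Sum>j<k. g (d i j) (d i (j+1))) = (\<Sum>j<k. g (d i (j+1)) (d i (j+2)))"
proof (cases k)
  case 0 thus ?thesis by simp
next
  case (Suc k')
  have "(\<Sum>j<Suc k. g (d i j) (d i (j+1))) = g (d i 0) (d i 1) + (\<Sum>j<k. g (d i (j+1)) (d i (j+2)))"
    by (subst sum.lessThan_Suc_shift) (simp add: numeral_2_eq_2)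
  moreover have "(\<Sum>j<Suc k. g (d i j) (d i (j+1))) = (\<Sum>j<k. g (d i j) (d i (j+1))) + g (d i k) (d i (k+1))"
    by simp
  ultimately show ?thesis using c by simp
qed

lemma shift_sum:
  assumes c: "circular b k d"
  shows "(\<Sum>r<b * k. g (uu k d r) (vv k d r)) = (\<Sum>r<b * k. (g (vv k d r) (ww k d r) :: real))"
proof -
  have "(\<Sum>r<b * k. g (uu k d r) (vv k d r)) = (\<Sum>i<b. \<Sum>j<k. g (d (i+1) j) (d (i+1) (j+1)))"
    unfolding sum_blocks uu_def vv_def by (intro sum.cong refl) (simp add: block_idx)
  also have "\<dots> = (\<Sum>i<b. \<Sum>j<k. g (d (i+1) (j+1)) (d (i+1) (j+2)))"
  proof (rule sum.cong[OF refl])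
    fix i assume "i \<in> {..<b}"
    hence "d (i+1) 0 = d (i+1) k" "d (i+1) (k+1) = d (i+1) 1" using c unfolding circular_def by auto
    thus "(\<Sum>j<k. g (d (i+1) j) (d (i+1) (j+1))) = (\<Sum>j<k. g (d (i+1) (j+1)) (d (i+1) (j+2)))"
      by (rule shift_block)
  qed
  also have "\<dots> = (\<Sum>r<b * k. g (vv k d r) (ww k d r))"
    unfolding sum_blocks vv_def ww_def by (intro sum.cong refl) (simp add: block_idx add.assoc)
  finally show ?thesis .
qed

lemma nat_one_plus: "nat (1 + int x) = Suc x" by simp

lemma treat_T: "r < b * k \<Longrightarrow> c < t \<Longrightarrow> T_mat t b k d $$ (r, c) = ind (vv k d r) c"
  unfolding T_mat_def treat_matrix_def ind_def vv_def by (auto simp: nat_one_plus)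
lemma treat_L: "r < b * k \<Longrightarrow> c < t \<Longrightarrow> L_mat t b k d $$ (r, c) = ind (uu k d r) c"
  unfolding L_mat_def treat_matrix_def ind_def uu_def by (auto simp: nat_add_distrib)
lemma treat_R: "r < b * k \<Longrightarrow> c < t \<Longrightarrow> R_mat t b k d $$ (r, c) = ind (ww k d r) c"
  unfolding R_mat_def treat_matrix_def ind_def ww_def by (auto simp: nat_add_distrib)
lemma treat_carrier: "T_mat t b k d \<in> carrier_mat (b*k) t" "L_mat t b k d \<in> carrier_mat (b*k) t"
    "R_mat t b k d \<in> carrier_mat (b*k) t"
  unfolding T_mat_def L_mat_def R_mat_def treat_matrix_def by auto

lemma sum_3t: fixes f :: "nat \<Rightarrow> real"
  shows "(\<Sum>s<3 * t. f s) = (\<Sum>j<t. f j) + (\<Sum>j<t. f (t + j)) + (\<Sum>j<t. f (2 * t + j))"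
proof -
  have e: "3 * t = t + t + t" by simp
  have "(\<Sum>s<3 * t. f s) = (\<Sum>s<t + t + t. f s)" by (simp only: e)
  also have "\<dots> = (\<Sum>j<t. f j) + (\<Sum>j<t. f (t + j)) + (\<Sum>j<t. f (2 * t + j))"
    unfolding sum_lessThan_add by (simp add: mult_2)
  finally show ?thesis .
qed

definition Amat :: "nat \<Rightarrow> nat \<Rightarrow> nat \<Rightarrow> (nat \<Rightarrow> nat \<Rightarrow> nat) \<Rightarrow> real mat" where
  "Amat t b k d = hconcat (hconcat (T_mat t b k d) (L_mat t b k d)) (R_mat t b k d)"

lemma Amat_carrier: "Amat t b k d \<in> carrier_mat (b * k) (3 * t)"
  unfolding Amat_def using treat_carrier[of t b k d] by (auto simp: hconcat_def)

lemma Amat_entry: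
  assumes r: "r < b * k" and s: "s < 3 * t"
  shows "Amat t b k d $$ (r, s) = (if s < t then ind (vv k d r) s else if s < 2 * t then ind (uu k d r) (s - t)
     else ind (ww k d r) (s - 2 * t))"
  using r s treat_carrier[of t b k d]
  by (auto simp: Amat_def hconcat_def treat_T treat_L treat_R mult_2)

lemma Kmat_carrier: "K_mat t \<in> carrier_mat (3 * t) t" unfolding K_mat_def by simp

lemma Kmat_entry: "s < 3 * t \<Longrightarrow> c < t \<Longrightarrow> K_mat t $$ (s, c) = (if s mod t = c then 1 else 0)"
  unfolding K_mat_def by simp

lemma KtK: "transpose_mat (K_mat t) * K_mat t = 3 \<cdot>\<^sub>m 1\<^sub>m t"
proof (rule eq_matI)
  fix i j assume "i < dim_row (3 \<cdot>\<^sub>m 1\<^sub>m t :: real mat)" "j < dim_col (3 \<cdot>\<^sub>m 1\<^sub>m t :: real mat)"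
  hence ij: "i < t" "j < t" by auto
  have "(transpose_mat (K_mat t) * K_mat t) $$ (i, j) = (\<Sum>s<3 * t. K_mat t $$ (s, i) * K_mat t $$ (s, j))"
    using ij Kmat_carrier[of t] by (simp add: scalar_prod_def lessThan_atLeast0)
  also have "\<dots> = (\<Sum>s<3 * t. (if s mod t = i then 1 else 0) * (if s mod t = j then 1 else 0))"
    using ij by (intro sum.cong refl) (simp add: Kmat_entry)
  also have "\<dots> = 3 * (if i = j then 1 else 0)"
    unfolding sum_3t using ij by (simp add: if_distrib[of "\<lambda>x. x * _"] sum.If_cases cong: if_cong)
  finally show "(transpose_mat (K_mat t) * K_mat t) $$ (i, j) = (3 \<cdot>\<^sub>m 1\<^sub>m t :: real mat) $$ (i, j)"
    using ij by simp
qed (use Kmat_carrier[of t] in auto)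

lemma smult_one_mult: "(a \<cdot>\<^sub>m 1\<^sub>m t) * (c \<cdot>\<^sub>m 1\<^sub>m t) = ((a * c) :: real) \<cdot>\<^sub>m 1\<^sub>m t"
proof -
  have "(a \<cdot>\<^sub>m 1\<^sub>m t) * (c \<cdot>\<^sub>m 1\<^sub>m t) = a \<cdot>\<^sub>m (1\<^sub>m t * (c \<cdot>\<^sub>m 1\<^sub>m t))"
    by (rule mult_smult_assoc_mat) auto
  also have "\<dots> = a \<cdot>\<^sub>m (c \<cdot>\<^sub>m 1\<^sub>m t)" by simp
  also have "\<dots> = (a * c) \<cdot>\<^sub>m 1\<^sub>m t" by (rule eq_matI) auto
  finally show ?thesis .
qed

lemma transpose_smult_one[simp]: "transpose_mat (a \<cdot>\<^sub>m 1\<^sub>m t) = a \<cdot>\<^sub>m 1\<^sub>m t"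
  by (rule eq_matI) auto

lemma mp_KtK: "mp_inverse (transpose_mat (K_mat t) * K_mat t) = (1/3) \<cdot>\<^sub>m 1\<^sub>m t"
  unfolding KtK
proof (rule mp_inverse_eq)
  show "penrose (3 \<cdot>\<^sub>m 1\<^sub>m t) ((1/3) \<cdot>\<^sub>m 1\<^sub>m t)"
    unfolding penrose_def by (simp add: smult_one_mult)
qed

definition Sx :: "nat \<Rightarrow> (nat \<Rightarrow> nat \<Rightarrow> nat) \<Rightarrow> nat \<Rightarrow> nat \<Rightarrow> real" where
  "Sx k d r c = ind (uu k d r) c + ind (vv k d r) c + ind (ww k d r) c"

definition X1m :: "nat \<Rightarrow> nat \<Rightarrow> nat \<Rightarrow> (nat \<Rightarrow> nat \<Rightarrow> nat) \<Rightarrow> real mat" where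
  "X1m t b k d = mat (b * k) t (\<lambda>(r, c). Sx k d r c / 3)"

lemma sum_delta_real: fixes c t :: nat shows "c < t \<Longrightarrow> (\<Sum>j<t. (f j :: real) * (if j = c then 1 else 0)) = f c"
  by (simp add: if_distrib[of "\<lambda>x. _ * x"] cong: if_cong)

lemma AK: assumes r: "r < b * k" and c: "c < t"
  shows "(Amat t b k d * K_mat t) $$ (r, c) = Sx k d r c"
proof -
  have "(Amat t b k d * K_mat t) $$ (r, c) = (\<Sum>s<3 * t. Amat t b k d $$ (r, s) * K_mat t $$ (s, c))"
    using r c Amat_carrier[of t b k d] Kmat_carrier[of t] by (simp add: scalar_prod_def lessThan_atLeast0)
  also have "\<dots> = (\<Sum>j<t. ind (vv k d r) j * (if j = c then 1 else 0)) + (\<Sum>j<t. ind (uu k d r) j * (if j = c then 1 else 0))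
      + (\<Sum>j<t. ind (ww k d r) j * (if j = c then 1 else 0))"
    unfolding sum_3t using r c by (simp add: Amat_entry Kmat_entry)
  also have "\<dots> = Sx k d r c" unfolding Sx_def using c by (simp add: sum_delta_real)
  finally show ?thesis .
qed

lemma X1_eq: "Amat t b k d * K_mat t * mp_inverse (transpose_mat (K_mat t) * K_mat t) = X1m t b k d"
proof (rule eq_matI)
  fix r c assume "r < dim_row (X1m t b k d)" "c < dim_col (X1m t b k d)"
  hence rc: "r < b * k" "c < t" unfolding X1m_def by auto
  have AKc: "Amat t b k d * K_mat t \<in> carrier_mat (b * k) t" using Amat_carrier[of t b k d] Kmat_carrier[of t] by simp
  have "Amat t b k d * K_mat t * ((1/3) \<cdot>\<^sub>m 1\<^sub>m t) = (1/3) \<cdot>\<^sub>m (Amat t b k d * K_mat t * 1\<^sub>m t)"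
    using AKc by (intro mult_smult_distrib) auto
  also have "\<dots> = (1/3) \<cdot>\<^sub>m (Amat t b k d * K_mat t)" using right_mult_one_mat[OF AKc] by simp
  finally have "(Amat t b k d * K_mat t * ((1/3) \<cdot>\<^sub>m 1\<^sub>m t)) $$ (r, c) = (1/3) * (Amat t b k d * K_mat t) $$ (r, c)"
    using rc AKc carrier_matD[OF AKc] by simp
  thus "(Amat t b k d * K_mat t * mp_inverse (transpose_mat (K_mat t) * K_mat t)) $$ (r, c) = X1m t b k d $$ (r, c)"
    unfolding mp_KtK using rc AK[OF rc] by (simp add: X1m_def)
qed (use Amat_carrier[of t b k d] Kmat_carrier[of t] in \<open>auto simp: X1m_def mp_KtK\<close>)

definition bsum :: "nat \<Rightarrow> (nat \<Rightarrow> real) \<Rightarrow> nat \<Rightarrow> real" where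
  "bsum k f i = (\<Sum>j<k. f (i * k + j))"

lemma sum_same_block:
  fixes b k r :: nat assumes r: "r < b * k"
  shows "(\<Sum>r'<b * k. (if r div k = r' div k then g r' else 0)) = bsum k g (r div k)"
proof -
  have rb: "r div k < b" using r by (simp add: less_mult_imp_div_less)
  have "(\<Sum>r'<b * k. (if r div k = r' div k then g r' else 0)) = (\<Sum>i<b. \<Sum>j<k. if r div k = i then g (i * k + j) else 0)"
    unfolding sum_blocks by (intro sum.cong refl) (auto simp: block_idx)
  also have "\<dots> = (\<Sum>i<b. if i = r div k then bsum k g i else 0)"
    unfolding bsum_def by (intro sum.cong refl) auto
  also have "\<dots> = bsum k g (r div k)" using rb by simp
  finally show ?thesis .
qed

definition Qm :: "nat \<Rightarrow> nat \<Rightarrow> real mat" where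
  "Qm b k = mat (b * k) (b * k) (\<lambda>(r, r'). if r div k = r' div k then 1 / k else 0)"
definition Fm :: "nat \<Rightarrow> nat \<Rightarrow> real mat" where
  "Fm b k = mat b (b * k) (\<lambda>(i, r). if r div k = i then 1 / k else 0)"

lemma Bm_carrier: "block_matrix b k \<in> carrier_mat (b * k) b" unfolding block_matrix_def by simp
lemma Bm_entry: "r < b * k \<Longrightarrow> i < b \<Longrightarrow> block_matrix b k $$ (r, i) = (if r div k = i then 1 else 0)"
  unfolding block_matrix_def by simp

lemma Q_BF: "Qm b k = block_matrix b k * Fm b k"
proof (rule eq_matI)
  fix r r' assume "r < dim_row (block_matrix b k * Fm b k)" "r' < dim_col (block_matrix b k * Fm b k)"
  hence rr: "r < b * k" "r' < b * k" using Bm_carrier[of b k] by (auto simp: Fm_def)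
  have rb: "r div k < b" using rr by (simp add: less_mult_imp_div_less)
  have "(block_matrix b k * Fm b k) $$ (r, r') = (\<Sum>i<b. (if r div k = i then 1 else 0) * (if r' div k = i then 1 / k else 0))"
    using rr Bm_carrier[of b k] by (simp add: scalar_prod_def lessThan_atLeast0 Fm_def Bm_entry)
  also have "\<dots> = (\<Sum>i<b. if i = r div k then (if r' div k = r div k then 1 / k else 0) else 0)"
    by (intro sum.cong refl) auto
  also have "\<dots> = Qm b k $$ (r, r')" using rb rr by (auto simp: Qm_def)
  finally show "Qm b k $$ (r, r') = (block_matrix b k * Fm b k) $$ (r, r')" by simp
qed (use Bm_carrier[of b k] in \<open>auto simp: Qm_def Fm_def\<close>)

lemma Q_carrier: "Qm b k \<in> carrier_mat (b * k) (b * k)" unfolding Qm_def by simp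
lemma F_carrier: "Fm b k \<in> carrier_mat b (b * k)" unfolding Fm_def by simp

lemma Q_sym: "transpose_mat (Qm b k) = Qm b k"
  by (rule eq_matI) (auto simp: Qm_def)

lemma Q_idem: assumes k: "0 < k" shows "Qm b k * Qm b k = Qm b k"
proof (rule eq_matI)
  fix r r' assume "r < dim_row (Qm b k)" "r' < dim_col (Qm b k)"
  hence rr: "r < b * k" "r' < b * k" by (auto simp: Qm_def)
  have "(Qm b k * Qm b k) $$ (r, r') = (\<Sum>r''<b * k. (if r div k = r'' div k then 1 / k else 0) * (if r'' div k = r' div k then 1 / k else 0))"
    using rr by (simp add: scalar_prod_def lessThan_atLeast0 Qm_def)
  also have "\<dots> = (\<Sum>r''<b * k. if r div k = r'' div k then (if r div k = r' div k then 1 / k / k else 0) else 0)"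
    by (intro sum.cong refl) auto
  also have "\<dots> = bsum k (\<lambda>_. if r div k = r' div k then 1 / k / k else 0) (r div k)"
    by (rule sum_same_block[OF rr(1)])
  also have "\<dots> = Qm b k $$ (r, r')" using rr k by (simp add: bsum_def Qm_def)
  finally show "(Qm b k * Qm b k) $$ (r, r') = Qm b k $$ (r, r')" .
qed (auto simp: Qm_def)

lemma W_entry:
  assumes X: "X \<in> carrier_mat (b * k) t" and r: "r < b * k" and c: "c < t"
  shows "((1\<^sub>m (b * k) - Qm b k) * X) $$ (r, c) = X $$ (r, c) - bsum k (\<lambda>r'. X $$ (r', c)) (r div k) / k"
proof -
  have "((1\<^sub>m (b * k) - Qm b k) * X) $$ (r, c) = (\<Sum>r'<b * k. ((if r = r' then 1 else 0) - (if r div k = r' div k then 1 / k else 0)) * X $$ (r', c))"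
    using X r c by (simp add: scalar_prod_def lessThan_atLeast0 Qm_def)
  also have "\<dots> = (\<Sum>r'<b * k. (if r = r' then X $$ (r', c) else 0)) - (\<Sum>r'<b * k. (if r div k = r' div k then X $$ (r', c) / k else 0))"
  proof -
    have "(\<Sum>r'<b * k. ((if r = r' then 1 else 0) - (if r div k = r' div k then 1 / k else 0)) * X $$ (r', c))
       = (\<Sum>r'<b * k. (if r = r' then X $$ (r', c) else 0) - (if r div k = r' div k then X $$ (r', c) / k else 0))"
      by (intro sum.cong refl) (auto simp: algebra_simps)
    thus ?thesis by (simp add: sum_subtractf)
  qed
  also have "(\<Sum>r'<b * k. (if r = r' then X $$ (r', c) else 0)) = X $$ (r, c)" using r by simp
  also have "(\<Sum>r'<b * k. (if r div k = r' div k then X $$ (r', c) / k else 0)) = bsum k (\<lambda>r'. X $$ (r', c) / k) (r div k)"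
    by (rule sum_same_block[OF r])
  also have "\<dots> = bsum k (\<lambda>r'. X $$ (r', c)) (r div k) / k" unfolding bsum_def by (simp add: sum_divide_distrib)
  finally show ?thesis .
qed

lemma tmult_entry:
  assumes "X \<in> carrier_mat n t" "V \<in> carrier_mat n t'" "a < t" "c < t'"
  shows "(transpose_mat X * V) $$ (a, c) = (\<Sum>r<n. X $$ (r, a) * V $$ (r, c))"
  using assms by (simp add: scalar_prod_def lessThan_atLeast0)

lemma sum_by_blocks: fixes b k :: nat and f :: "nat \<Rightarrow> real"
  shows "(\<Sum>r<b * k. f r * g (r div k)) = (\<Sum>i<b. bsum k f i * g i)"
  unfolding sum_blocks bsum_def sum_distrib_right by (intro sum.cong refl) (simp add: block_idx)

lemma W_carrier: "X \<in> carrier_mat (b * k) t \<Longrightarrow> (1\<^sub>m (b * k) - Qm b k) * X \<in> carrier_mat (b * k) t"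
  using Q_carrier[of b k] by (intro mult_carrier_mat[OF minus_carrier_mat]) auto

lemma E_entry:
  assumes X: "X \<in> carrier_mat (b * k) t" and a: "a < t" and c: "c < t"
  shows "(transpose_mat X * (1\<^sub>m (b * k) - Qm b k) * X) $$ (a, c) =
    (\<Sum>r<b * k. X $$ (r, a) * X $$ (r, c)) - (\<Sum>i<b. bsum k (\<lambda>r. X $$ (r, a)) i * bsum k (\<lambda>r. X $$ (r, c)) i) / k"
proof -
  have Rc: "1\<^sub>m (b * k) - Qm b k \<in> carrier_mat (b * k) (b * k)" using Q_carrier[of b k] by (simp add: minus_carrier_mat)
  have "transpose_mat X * (1\<^sub>m (b * k) - Qm b k) * X = transpose_mat X * ((1\<^sub>m (b * k) - Qm b k) * X)"
    using X Rc by (intro assoc_mult_mat) auto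
  hence "(transpose_mat X * (1\<^sub>m (b * k) - Qm b k) * X) $$ (a, c) = (\<Sum>r<b * k. X $$ (r, a) * ((1\<^sub>m (b * k) - Qm b k) * X) $$ (r, c))"
    using tmult_entry[OF X W_carrier[OF X] a c] by simp
  also have "\<dots> = (\<Sum>r<b * k. X $$ (r, a) * X $$ (r, c) - X $$ (r, a) * (bsum k (\<lambda>r'. X $$ (r', c)) (r div k) / k))"
    using X c by (intro sum.cong refl) (simp add: W_entry right_diff_distrib)
  also have "\<dots> = (\<Sum>r<b * k. X $$ (r, a) * X $$ (r, c)) - (\<Sum>r<b * k. X $$ (r, a) * (bsum k (\<lambda>r'. X $$ (r', c)) (r div k) / k))"
    by (rule sum_subtractf)
  also have "(\<Sum>r<b * k. X $$ (r, a) * (bsum k (\<lambda>r'. X $$ (r', c)) (r div k) / k)) = (\<Sum>i<b. bsum k (\<lambda>r. X $$ (r, a)) i * (bsum k (\<lambda>r'. X $$ (r', c)) i / k))"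
    by (rule sum_by_blocks)
  also have "\<dots> = (\<Sum>i<b. bsum k (\<lambda>r. X $$ (r, a)) i * bsum k (\<lambda>r. X $$ (r, c)) i) / k"
    by (simp add: sum_divide_distrib)
  finally show ?thesis .
qed

lemma idx_bound: fixes i j b k :: nat assumes "i < b" "j < k" shows "i * k + j < b * k"
proof -
  have "i * k + j < Suc i * k" using assms by simp
  also have "\<dots> \<le> b * k" using assms by (intro mult_le_mono1) simp
  finally show ?thesis .
qed

lemma BtW:
  assumes X: "X \<in> carrier_mat (b * k) t" and k: "0 < k"
  shows "transpose_mat (block_matrix b k) * ((1\<^sub>m (b * k) - Qm b k) * X) = 0\<^sub>m b t"
proof (rule eq_matI)
  fix i c assume "i < dim_row (0\<^sub>m b t :: real mat)" "c < dim_col (0\<^sub>m b t :: real mat)"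
  hence ic: "i < b" "c < t" by auto
  define W where "W = (1\<^sub>m (b * k) - Qm b k) * X"
  have "(transpose_mat (block_matrix b k) * W) $$ (i, c)
      = (\<Sum>r<b * k. (if r div k = i then 1 else 0) * W $$ (r, c))"
    using tmult_entry[OF Bm_carrier[of b k] W_carrier[OF X] ic] ic unfolding W_def by (simp add: Bm_entry)
  also have "\<dots> = (\<Sum>i'<b. \<Sum>j<k. (if i' = i then 1 else 0) * W $$ (i' * k + j, c))"
    unfolding sum_blocks by (intro sum.cong refl) (simp add: block_idx)
  also have "\<dots> = (\<Sum>i'<b. if i' = i then (\<Sum>j<k. W $$ (i * k + j, c)) else 0)"
    by (intro sum.cong refl) auto
  also have "\<dots> = (\<Sum>j<k. W $$ (i * k + j, c))" using ic by simp
  also have "\<dots> = (\<Sum>j<k. X $$ (i * k + j, c) - bsum k (\<lambda>r'. X $$ (r', c)) i / k)"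
  proof (rule sum.cong[OF refl])
    fix j assume "j \<in> {..<k}"
    hence j: "j < k" by simp
    have "W $$ (i * k + j, c) = X $$ (i * k + j, c) - bsum k (\<lambda>r'. X $$ (r', c)) ((i * k + j) div k) / k"
      unfolding W_def by (rule W_entry[OF X idx_bound[OF ic(1) j] ic(2)])
    thus "W $$ (i * k + j, c) = X $$ (i * k + j, c) - bsum k (\<lambda>r'. X $$ (r', c)) i / k"
      using j by (simp add: block_idx)
  qed
  also have "\<dots> = 0" using k by (simp add: sum_subtractf bsum_def)
  finally show "(transpose_mat (block_matrix b k) * ((1\<^sub>m (b * k) - Qm b k) * X)) $$ (i, c) = 0\<^sub>m b t $$ (i, c)"
    using ic unfolding W_def by simp
qed (use Bm_carrier[of b k] X in auto)

definition Mm :: "nat \<Rightarrow> real mat" where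
  "Mm t = 1\<^sub>m (3 * t) - K_mat t * ((1/3) \<cdot>\<^sub>m 1\<^sub>m t) * transpose_mat (K_mat t)"

lemma Mm_carrier: "Mm t \<in> carrier_mat (3 * t) (3 * t)"
  unfolding Mm_def using Kmat_carrier[of t]
  by (intro minus_carrier_mat mult_carrier_mat[of _ _ t] smult_carrier_mat one_carrier_mat) auto

lemma Mm_entry:
  assumes s: "s < 3 * t" and s': "s' < 3 * t"
  shows "Mm t $$ (s, s') = (if s = s' then 1 else 0) - (if s mod t = s' mod t then 1/3 else 0)"
proof -
  have Kc: "K_mat t \<in> carrier_mat (3 * t) t" by (rule Kmat_carrier)
  have tpos: "0 < t" using s by simp
  have "K_mat t * ((1/3) \<cdot>\<^sub>m 1\<^sub>m t) = (1/3) \<cdot>\<^sub>m (K_mat t * 1\<^sub>m t)" using Kc by (intro mult_smult_distrib) auto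
  also have "\<dots> = (1/3) \<cdot>\<^sub>m K_mat t" using right_mult_one_mat[OF Kc] by simp
  finally have e1: "K_mat t * ((1/3) \<cdot>\<^sub>m 1\<^sub>m t) = (1/3) \<cdot>\<^sub>m K_mat t" .
  have e2: "((1/3) \<cdot>\<^sub>m K_mat t) * transpose_mat (K_mat t) = (1/3) \<cdot>\<^sub>m (K_mat t * transpose_mat (K_mat t))"
    using Kc by (intro mult_smult_assoc_mat) auto
  have "(K_mat t * transpose_mat (K_mat t)) $$ (s, s') = (\<Sum>a<t. (if s mod t = a then 1 else 0) * (if s' mod t = a then 1 else 0))"
    using s s' Kc by (simp add: scalar_prod_def lessThan_atLeast0 Kmat_entry)
  also have "\<dots> = (\<Sum>a<t. if a = s mod t then (if s' mod t = s mod t then 1 else 0) else 0)"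
    by (intro sum.cong refl) auto
  also have "\<dots> = (if s mod t = s' mod t then 1 else 0)" using tpos by auto
  finally have e3: "(K_mat t * transpose_mat (K_mat t)) $$ (s, s') = (if s mod t = s' mod t then 1 else 0)" .
  show ?thesis unfolding Mm_def e1 e2 using s s' Kc e3 by simp
qed

lemma Mm_sym: "transpose_mat (Mm t) = Mm t"
proof (rule eq_matI)
  fix i j assume "i < dim_row (Mm t)" "j < dim_col (Mm t)"
  hence ij: "i < 3 * t" "j < 3 * t" using Mm_carrier[of t] by auto
  show "transpose_mat (Mm t) $$ (i, j) = Mm t $$ (i, j)"
    using ij Mm_carrier[of t] by (simp add: Mm_entry)
qed (use Mm_carrier[of t] in auto)

lemma Mm_kills:
  assumes Z: "Z \<in> carrier_mat (3 * t) t'" and per: "\<And>s c. s < 3 * t \<Longrightarrow> c < t' \<Longrightarrow> Z $$ (s, c) = Z $$ (s mod t, c)"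
  shows "Mm t * Z = 0\<^sub>m (3 * t) t'"
proof (rule eq_matI)
  fix s c assume "s < dim_row (0\<^sub>m (3 * t) t' :: real mat)" "c < dim_col (0\<^sub>m (3 * t) t' :: real mat)"
  hence sc: "s < 3 * t" "c < t'" by auto
  have tpos: "0 < t" using sc by simp
  have sm: "s mod t < t" using tpos by simp
  have "(Mm t * Z) $$ (s, c) = (\<Sum>s'<3 * t. ((if s = s' then 1 else 0) - (if s mod t = s' mod t then 1/3 else 0)) * Z $$ (s', c))"
    using sc Z Mm_carrier[of t] by (simp add: scalar_prod_def lessThan_atLeast0 Mm_entry)
  also have "\<dots> = (\<Sum>s'<3 * t. (if s = s' then Z $$ (s', c) else 0)) - (\<Sum>s'<3 * t. (if s mod t = s' mod t then Z $$ (s', c) / 3 else 0))"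
  proof -
    have "(\<Sum>s'<3 * t. ((if s = s' then 1 else 0) - (if s mod t = s' mod t then 1/3 else 0)) * Z $$ (s', c))
       = (\<Sum>s'<3 * t. (if s = s' then Z $$ (s', c) else 0) - (if s mod t = s' mod t then Z $$ (s', c) / 3 else 0))"
      by (intro sum.cong refl) auto
    thus ?thesis by (simp add: sum_subtractf)
  qed
  also have "(\<Sum>s'<3 * t. (if s = s' then Z $$ (s', c) else 0)) = Z $$ (s, c)" using sc by simp
  also have "(\<Sum>s'<3 * t. (if s mod t = s' mod t then Z $$ (s', c) / 3 else 0)) = Z $$ (s mod t, c)"
  proof -
    have "(\<Sum>s'<3 * t. (if s mod t = s' mod t then Z $$ (s', c) / 3 else 0))
        = (\<Sum>j<t. if s mod t = j then Z $$ (j, c) / 3 else 0) + (\<Sum>j<t. if s mod t = j then Z $$ (j, c) / 3 else 0)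
          + (\<Sum>j<t. if s mod t = j then Z $$ (j, c) / 3 else 0)"
    proof -
      have a: "(t + j) mod t = j" "(2 * t + j) mod t = j" if "j < t" for j using that by auto
      have b: "Z $$ (t + j, c) = Z $$ (j, c)" "Z $$ (2 * t + j, c) = Z $$ (j, c)" if "j < t" for j
        using per[of "t + j" c] per[of "2 * t + j" c] that sc a[OF that] by auto
      show ?thesis unfolding sum_3t by (intro arg_cong2[where f = "(+)"] sum.cong refl) (auto simp: a b)
    qed
    also have "\<dots> = Z $$ (s mod t, c)" using sm by simp
    finally show ?thesis .
  qed
  finally show "(Mm t * Z) $$ (s, c) = 0\<^sub>m (3 * t) t' $$ (s, c)" using per[OF sc] sc by simp
qed (use Z Mm_carrier[of t] in auto)

lemma UtW_zero:
  assumes W: "W \<in> carrier_mat (b * k) t'" and A: "A \<in> carrier_mat (b * k) (3 * t)"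
    and per: "\<And>s c. s < 3 * t \<Longrightarrow> c < t' \<Longrightarrow> (transpose_mat A * W) $$ (s, c) = (transpose_mat A * W) $$ (s mod t, c)"
  shows "transpose_mat (A * Mm t) * W = 0\<^sub>m (3 * t) t'"
proof -
  have "transpose_mat (A * Mm t) * W = Mm t * (transpose_mat A * W)"
    using A W Mm_carrier[of t] Mm_sym[of t] by (simp add: transpose_mult_dim assoc_dim carrier_matD del: assoc_mult_mat)
  also have "\<dots> = 0\<^sub>m (3 * t) t'" by (rule Mm_kills) (use A W per in auto)
  finally show ?thesis .
qed

definition tri :: "nat \<Rightarrow> nat \<Rightarrow> (nat \<Rightarrow> nat \<Rightarrow> nat) \<Rightarrow> bool" where
  "tri b k d \<longleftrightarrow> (\<forall>r<b*k. uu k d r \<noteq> vv k d r \<and> vv k d r \<noteq> ww k d r \<and> uu k d r \<noteq> ww k d r)"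

definition rng :: "nat \<Rightarrow> nat \<Rightarrow> nat \<Rightarrow> (nat \<Rightarrow> nat \<Rightarrow> nat) \<Rightarrow> bool" where
  "rng t b k d \<longleftrightarrow> (\<forall>r<b*k. uu k d r \<in> {1..t} \<and> vv k d r \<in> {1..t} \<and> ww k d r \<in> {1..t})"

lemma div_bound: fixes r b k :: nat shows "r < b * k \<Longrightarrow> r div k < b"
  by (simp add: less_mult_imp_div_less)

lemma mod_bound: fixes r b k :: nat shows "r < b * k \<Longrightarrow> r mod k < k"
  by (cases "k = 0") auto

lemma rng_Omega: assumes "d \<in> Omega t b k" shows "rng t b k d"
  unfolding rng_def
proof (intro allI impI)
  fix r assume r: "r < b * k"
  have i: "r div k + 1 \<in> {1..b}" using div_bound[OF r] by simp
  have j: "r mod k < k" using mod_bound[OF r] .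
  have D: "\<forall>i\<in>{1..b}. \<forall>j\<in>{0..k+1}. d i j \<in> {1..t}" using assms unfolding Omega_def is_design_def by blast
  show "uu k d r \<in> {1..t} \<and> vv k d r \<in> {1..t} \<and> ww k d r \<in> {1..t}"
    unfolding uu_def vv_def ww_def using D[rule_format, OF i] j by simp
qed

lemma circ_at: "circular b k d \<Longrightarrow> i \<in> {1..b} \<Longrightarrow> d i 0 = d i k \<and> d i (k+1) = d i 1"
  unfolding circular_def by blast

lemma tri_nsn:
  assumes c: "circular b k d" and n: "no_self_neighbors b k d"
  shows "tri b k d"
  unfolding tri_def
proof (intro allI impI)
  fix r assume r: "r < b * k"
  define i where "i = r div k + 1"
  define j where "j = r mod k + 1"
  have i: "i \<in> {1..b}" unfolding i_def using div_bound[OF r] by simp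
  have j: "j \<in> {1..k}" unfolding j_def using mod_bound[OF r] by simp
  have N: "\<forall>i\<in>{1..b}. \<forall>j\<in>{1..k}. d i j \<noteq> d i (j-1) \<and> d i (j-1) \<noteq> d i (j+1)"
    using n unfolding no_self_neighbors_def by blast
  have e: "uu k d r = d i (j - 1)" "vv k d r = d i j" "ww k d r = d i (j + 1)"
    unfolding uu_def vv_def ww_def i_def j_def by simp_all
  have a: "d i j \<noteq> d i (j-1)" "d i (j-1) \<noteq> d i (j+1)" using N i j by auto
  have b: "d i j \<noteq> d i (j+1)"
  proof (cases "j < k")
    case True
    hence "j + 1 \<in> {1..k}" by simp
    thus ?thesis using N i by fastforce
  next
    case False
    hence jk: "j = k" using j by simp
    have "1 \<in> {1..k}" using j by auto
    hence "d i 1 \<noteq> d i 0" using N i by fastforce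
    thus ?thesis using circ_at[OF c i] jk by simp
  qed
  show "uu k d r \<noteq> vv k d r \<and> vv k d r \<noteq> ww k d r \<and> uu k d r \<noteq> ww k d r"
    unfolding e using a b by auto
qed

lemma tri_binary:
  assumes c: "circular b k d" and bin: "binary_design b k d" and k: "3 \<le> k"
  shows "tri b k d"
  unfolding tri_def
proof (intro allI impI)
  fix r assume r: "r < b * k"
  define i where "i = r div k + 1"
  define j where "j = r mod k + 1"
  have i: "i \<in> {1..b}" unfolding i_def using div_bound[OF r] by simp
  have j: "j \<in> {1..k}" unfolding j_def using mod_bound[OF r] by simp
  have inj: "inj_on (d i) {1..k}" using bin i unfolding binary_design_def by blast
  have e: "uu k d r = d i (j - 1)" "vv k d r = d i j" "ww k d r = d i (j + 1)"
    unfolding uu_def vv_def ww_def i_def j_def by simp_all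
  define pu where "pu = (if j = 1 then k else j - 1)"
  define pw where "pw = (if j = k then 1 else j + 1)"
  have pu: "d i (j - 1) = d i pu" "pu \<in> {1..k}" unfolding pu_def using circ_at[OF c i] j k by auto
  have pw: "d i (j + 1) = d i pw" "pw \<in> {1..k}" unfolding pw_def using circ_at[OF c i] j k by auto
  have d1: "pu \<noteq> j" "j \<noteq> pw" "pu \<noteq> pw" unfolding pu_def pw_def using j k by auto
  have "d i pu \<noteq> d i j" "d i j \<noteq> d i pw" "d i pu \<noteq> d i pw"
    using inj_onD[OF inj] pu(2) pw(2) j d1 by metis+
  thus "uu k d r \<noteq> vv k d r \<and> vv k d r \<noteq> ww k d r \<and> uu k d r \<noteq> ww k d r"
    unfolding e pu(1) pw(1) by auto
qed

lemma sum_if_card: fixes n :: nat shows "(\<Sum>r<n. if P r then 1 else 0 :: real) = real (card {r. r < n \<and> P r})"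
proof -
  have "(\<Sum>r<n. if P r then 1 else 0 :: real) = (\<Sum>r\<in>{r. r < n \<and> P r}. 1)"
    by (subst sum.inter_filter[symmetric]) (auto simp: lessThan_def Collect_conj_eq[symmetric] intro!: sum.cong)
  thus ?thesis by simp
qed

lemma unblock: fixes a c k :: nat assumes "1 \<le> a" "1 \<le> c" "c \<le> k"
  shows "((a - 1) * k + (c - 1)) div k + 1 = a" "((a - 1) * k + (c - 1)) mod k + 1 = c"
proof -
  have "c - 1 < k" using assms by simp
  thus "((a - 1) * k + (c - 1)) div k + 1 = a" "((a - 1) * k + (c - 1)) mod k + 1 = c"
    using block_idx[of "c - 1" k "a - 1"] assms by simp_all
qed

lemma card_inner:
  fixes k :: nat assumes k: "0 < k"
  shows "card {(i,j) \<in> inner_plots b k. P i j} = card {r. r < b * k \<and> P (r div k + 1) (r mod k + 1)}"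
proof -
  have "bij_betw (\<lambda>r. (r div k + 1, r mod k + 1)) {r. r < b * k \<and> P (r div k + 1) (r mod k + 1)} {(i,j) \<in> inner_plots b k. P i j}"
  proof (rule bij_betw_byWitness[where f' = "\<lambda>(i,j). (i - 1) * k + (j - 1)"])
    show "\<forall>a\<in>{r. r < b * k \<and> P (r div k + 1) (r mod k + 1)}. (case (a div k + 1, a mod k + 1) of (i, j) \<Rightarrow> (i - 1) * k + (j - 1)) = a"
      by simp
    show "\<forall>a'\<in>{(i,j) \<in> inner_plots b k. P i j}. (\<lambda>r. (r div k + 1, r mod k + 1)) ((\<lambda>(i,j). (i - 1) * k + (j - 1)) a') = a'"
    proof
      fix a' assume "a' \<in> {(i,j) \<in> inner_plots b k. P i j}"
      then obtain i j where a': "a' = (i, j)" "1 \<le> i" "1 \<le> j" "j \<le> k" unfolding inner_plots_def by auto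
      show "(\<lambda>r. (r div k + 1, r mod k + 1)) ((\<lambda>(i,j). (i - 1) * k + (j - 1)) a') = a'"
        unfolding a'(1) prod.case by (simp only: unblock[OF a'(2-4)])
    qed
    show "(\<lambda>r. (r div k + 1, r mod k + 1)) ` {r. r < b * k \<and> P (r div k + 1) (r mod k + 1)} \<subseteq> {(i, j). (i, j) \<in> inner_plots b k \<and> P i j}"
      unfolding inner_plots_def using k by (auto simp: div_bound mod_bound Suc_leI)
    show "(\<lambda>(i, j). (i - 1) * k + (j - 1)) ` {(i,j) \<in> inner_plots b k. P i j} \<subseteq> {r. r < b * k \<and> P (r div k + 1) (r mod k + 1)}"
    proof (rule image_subsetI)
      fix a' assume "a' \<in> {(i,j) \<in> inner_plots b k. P i j}"
      then obtain i j where a': "a' = (i, j)" "1 \<le> i" "1 \<le> j" "j \<le> k" "i \<le> b" "P i j"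
        unfolding inner_plots_def by auto
      have bd: "(i - 1) * k + (j - 1) < b * k" using a' by (intro idx_bound) auto
      have "P (((i - 1) * k + (j - 1)) div k + 1) (((i - 1) * k + (j - 1)) mod k + 1)"
        by (simp only: unblock[OF a'(2-4)] a'(6))
      thus "(\<lambda>(i, j). (i - 1) * k + (j - 1)) a' \<in> {r. r < b * k \<and> P (r div k + 1) (r mod k + 1)}"
        unfolding a'(1) prod.case using bd by blast
    qed
  qed
  thus ?thesis by (simp add: bij_betw_same_card)
qed

definition D0 :: "nat \<Rightarrow> nat \<Rightarrow> (nat \<Rightarrow> nat \<Rightarrow> nat) \<Rightarrow> nat \<Rightarrow> nat \<Rightarrow> real" where
  "D0 b k d a c = (\<Sum>r<b*k. ind (vv k d r) a * ind (vv k d r) c)"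
definition N1 :: "nat \<Rightarrow> nat \<Rightarrow> (nat \<Rightarrow> nat \<Rightarrow> nat) \<Rightarrow> nat \<Rightarrow> nat \<Rightarrow> real" where
  "N1 b k d a c = (\<Sum>r<b*k. ind (vv k d r) a * ind (ww k d r) c)"
definition N2 :: "nat \<Rightarrow> nat \<Rightarrow> (nat \<Rightarrow> nat \<Rightarrow> nat) \<Rightarrow> nat \<Rightarrow> nat \<Rightarrow> real" where
  "N2 b k d a c = (\<Sum>r<b*k. ind (uu k d r) a * ind (ww k d r) c)"

lemma shift_ids:
  assumes c: "circular b k d"
  shows "(\<Sum>r<b*k. ind (uu k d r) a * ind (uu k d r) c) = D0 b k d a c"
    "(\<Sum>r<b*k. ind (ww k d r) a * ind (ww k d r) c) = D0 b k d a c"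
    "(\<Sum>r<b*k. ind (uu k d r) a * ind (vv k d r) c) = N1 b k d a c"
    "(\<Sum>r<b*k. ind (vv k d r) a * ind (uu k d r) c) = N1 b k d c a"
    "(\<Sum>r<b*k. ind (ww k d r) a * ind (vv k d r) c) = N1 b k d c a"
    "(\<Sum>r<b*k. ind (ww k d r) a * ind (uu k d r) c) = N2 b k d c a"
    "(\<Sum>r<b*k. ind (vv k d r) a * ind (ww k d r) c) = N1 b k d a c"
    "(\<Sum>r<b*k. ind (uu k d r) a * ind (ww k d r) c) = N2 b k d a c"
    "(\<Sum>r<b*k. ind (vv k d r) a * ind (vv k d r) c) = D0 b k d a c"
proof -
  show "(\<Sum>r<b*k. ind (uu k d r) a * ind (uu k d r) c) = D0 b k d a c"
    unfolding D0_def using shift_sum[OF c, of "\<lambda>x y. ind x a * ind x c"] by simp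
  show "(\<Sum>r<b*k. ind (ww k d r) a * ind (ww k d r) c) = D0 b k d a c"
    unfolding D0_def using shift_sum[OF c, of "\<lambda>x y. ind y a * ind y c"] by simp
  show "(\<Sum>r<b*k. ind (uu k d r) a * ind (vv k d r) c) = N1 b k d a c"
    unfolding N1_def using shift_sum[OF c, of "\<lambda>x y. ind x a * ind y c"] by simp
  have "(\<Sum>r<b*k. ind (vv k d r) a * ind (uu k d r) c) = (\<Sum>r<b*k. ind (ww k d r) a * ind (vv k d r) c)"
    using shift_sum[OF c, of "\<lambda>x y. ind y a * ind x c"] by simp
  also have "\<dots> = N1 b k d c a" unfolding N1_def by (simp add: mult.commute)
  finally show "(\<Sum>r<b*k. ind (vv k d r) a * ind (uu k d r) c) = N1 b k d c a" .
  show "(\<Sum>r<b*k. ind (ww k d r) a * ind (vv k d r) c) = N1 b k d c a" unfolding N1_def by (simp add: mult.commute)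
  show "(\<Sum>r<b*k. ind (ww k d r) a * ind (uu k d r) c) = N2 b k d c a" unfolding N2_def by (simp add: mult.commute)
  show "(\<Sum>r<b*k. ind (vv k d r) a * ind (ww k d r) c) = N1 b k d a c" unfolding N1_def ..
  show "(\<Sum>r<b*k. ind (uu k d r) a * ind (ww k d r) c) = N2 b k d a c" unfolding N2_def ..
  show "(\<Sum>r<b*k. ind (vv k d r) a * ind (vv k d r) c) = D0 b k d a c" unfolding D0_def ..
qed

lemma FS_ids:
  assumes c: "circular b k d"
  shows "(\<Sum>r<b*k. ind (vv k d r) a * Sx k d r c) = N1 b k d c a + D0 b k d a c + N1 b k d a c"
    "(\<Sum>r<b*k. ind (uu k d r) a * Sx k d r c) = D0 b k d a c + N1 b k d a c + N2 b k d a c"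
    "(\<Sum>r<b*k. ind (ww k d r) a * Sx k d r c) = N2 b k d c a + N1 b k d c a + D0 b k d a c"
  unfolding Sx_def distrib_left sum.distrib shift_ids[OF c] by simp_all

lemma bsum_shift:
  assumes c: "circular b k d" and i: "i < b"
  shows "bsum k (\<lambda>r. ind (uu k d r) a) i = bsum k (\<lambda>r. ind (vv k d r) a) i"
    "bsum k (\<lambda>r. ind (ww k d r) a) i = bsum k (\<lambda>r. ind (vv k d r) a) i"
proof -
  have ci: "d (i+1) 0 = d (i+1) k" "d (i+1) (k+1) = d (i+1) 1" using circ_at[OF c, of "i+1"] i by auto
  have eu: "bsum k (\<lambda>r. ind (uu k d r) a) i = (\<Sum>j<k. ind (d (i+1) j) a)"
    unfolding bsum_def uu_def by (intro sum.cong refl) (simp add: block_idx)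
  have ev: "bsum k (\<lambda>r. ind (vv k d r) a) i = (\<Sum>j<k. ind (d (i+1) (j+1)) a)"
    unfolding bsum_def vv_def by (intro sum.cong refl) (simp add: block_idx)
  have ew: "bsum k (\<lambda>r. ind (ww k d r) a) i = (\<Sum>j<k. ind (d (i+1) (j+2)) a)"
    unfolding bsum_def ww_def by (intro sum.cong refl) (simp add: block_idx)
  show "bsum k (\<lambda>r. ind (uu k d r) a) i = bsum k (\<lambda>r. ind (vv k d r) a) i"
    unfolding eu ev using shift_block[of d "i+1" k "\<lambda>x y. ind x a", OF ci] by simp
  show "bsum k (\<lambda>r. ind (ww k d r) a) i = bsum k (\<lambda>r. ind (vv k d r) a) i"
    unfolding ew ev using shift_block[of d "i+1" k "\<lambda>x y. ind y a", OF ci] by simp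
qed

lemma fW:
  assumes X: "X \<in> carrier_mat (b * k) t" and c: "c < t"
  shows "(\<Sum>r<b*k. f r * ((1\<^sub>m (b * k) - Qm b k) * X) $$ (r, c)) =
     (\<Sum>r<b*k. f r * X $$ (r, c)) - (\<Sum>i<b. bsum k f i * bsum k (\<lambda>r. X $$ (r, c)) i) / k"
proof -
  have "(\<Sum>r<b*k. f r * ((1\<^sub>m (b * k) - Qm b k) * X) $$ (r, c))
      = (\<Sum>r<b*k. f r * X $$ (r, c) - f r * (bsum k (\<lambda>r'. X $$ (r', c)) (r div k) / k))"
    using X c by (intro sum.cong refl) (simp add: W_entry right_diff_distrib)
  also have "\<dots> = (\<Sum>r<b*k. f r * X $$ (r, c)) - (\<Sum>r<b*k. f r * (bsum k (\<lambda>r'. X $$ (r', c)) (r div k) / k))"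
    by (rule sum_subtractf)
  also have "(\<Sum>r<b*k. f r * (bsum k (\<lambda>r'. X $$ (r', c)) (r div k) / k)) = (\<Sum>i<b. bsum k f i * (bsum k (\<lambda>r'. X $$ (r', c)) i / k))"
    by (rule sum_by_blocks)
  also have "\<dots> = (\<Sum>i<b. bsum k f i * bsum k (\<lambda>r. X $$ (r, c)) i) / k"
    by (simp add: sum_divide_distrib)
  finally show ?thesis .
qed

lemma X1m_carrier: "X1m t b k d \<in> carrier_mat (b * k) t" unfolding X1m_def by simp

lemma X1m_entry: "r < b * k \<Longrightarrow> c < t \<Longrightarrow> X1m t b k d $$ (r, c) = Sx k d r c / 3"
  unfolding X1m_def by simp

lemma AtW_per:
  assumes circ: "circular b k d" and NN: "\<forall>a<t. \<forall>c<t. N2 b k d a c = N1 b k d c a"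
    and s: "s < 3 * t" and c: "c < t"
  shows "(transpose_mat (Amat t b k d) * ((1\<^sub>m (b * k) - Qm b k) * X1m t b k d)) $$ (s, c)
       = (transpose_mat (Amat t b k d) * ((1\<^sub>m (b * k) - Qm b k) * X1m t b k d)) $$ (s mod t, c)"
proof -
  define X where "X = X1m t b k d"
  have X: "X \<in> carrier_mat (b * k) t" unfolding X_def by (rule X1m_carrier)
  define W where "W = (1\<^sub>m (b * k) - Qm b k) * X"
  have Wc: "W \<in> carrier_mat (b * k) t" unfolding W_def by (rule W_carrier[OF X])
  define G where "G f = (\<Sum>r<b*k. f r * W $$ (r, c))" for f
  have GX: "G f = (\<Sum>r<b*k. f r * X $$ (r, c)) - (\<Sum>i<b. bsum k f i * bsum k (\<lambda>r. X $$ (r, c)) i) / k" for f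
    unfolding G_def W_def by (rule fW[OF X c])
  have FX: "(\<Sum>r<b*k. f r * X $$ (r, c)) = (\<Sum>r<b*k. f r * Sx k d r c) / 3" for f
    unfolding X_def sum_divide_distrib using c by (intro sum.cong refl) (simp add: X1m_entry)
  have Guv: "G (\<lambda>r. ind (uu k d r) a) = G (\<lambda>r. ind (vv k d r) a)" if a: "a < t" for a
  proof -
    have "(\<Sum>r<b*k. ind (uu k d r) a * Sx k d r c) = (\<Sum>r<b*k. ind (vv k d r) a * Sx k d r c)"
      unfolding FS_ids[OF circ] using NN a c by simp
    moreover have "(\<Sum>i<b. bsum k (\<lambda>r. ind (uu k d r) a) i * bsum k (\<lambda>r. X $$ (r, c)) i)
      = (\<Sum>i<b. bsum k (\<lambda>r. ind (vv k d r) a) i * bsum k (\<lambda>r. X $$ (r, c)) i)"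
      by (intro sum.cong refl) (simp add: bsum_shift[OF circ])
    ultimately show ?thesis unfolding GX FX by simp
  qed
  have Gwv: "G (\<lambda>r. ind (ww k d r) a) = G (\<lambda>r. ind (vv k d r) a)" if a: "a < t" for a
  proof -
    have "(\<Sum>r<b*k. ind (ww k d r) a * Sx k d r c) = (\<Sum>r<b*k. ind (vv k d r) a * Sx k d r c)"
      unfolding FS_ids[OF circ] using NN a c by simp
    moreover have "(\<Sum>i<b. bsum k (\<lambda>r. ind (ww k d r) a) i * bsum k (\<lambda>r. X $$ (r, c)) i)
      = (\<Sum>i<b. bsum k (\<lambda>r. ind (vv k d r) a) i * bsum k (\<lambda>r. X $$ (r, c)) i)"
      by (intro sum.cong refl) (simp add: bsum_shift[OF circ])
    ultimately show ?thesis unfolding GX FX by simp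
  qed
  have AW: "(transpose_mat (Amat t b k d) * W) $$ (s', c) = G (\<lambda>r. Amat t b k d $$ (r, s'))" if "s' < 3 * t" for s'
    unfolding G_def by (rule tmult_entry[OF Amat_carrier Wc that c])
  have tpos: "0 < t" using c by simp
  have "(transpose_mat (Amat t b k d) * W) $$ (s, c) = (transpose_mat (Amat t b k d) * W) $$ (s mod t, c)"
  proof (cases "s < t")
    case True thus ?thesis by simp
  next
    case False
    note nt = False
    show ?thesis
    proof (cases "s < 2 * t")
      case True
      have sm: "s mod t = s - t" using nt True by (simp add: le_mod_geq)
      have st: "s - t < t" using True nt by simp
      have "G (\<lambda>r. Amat t b k d $$ (r, s)) = G (\<lambda>r. ind (uu k d r) (s - t))"
        unfolding G_def using nt True s by (intro sum.cong refl) (simp add: Amat_entry)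
      also have "\<dots> = G (\<lambda>r. ind (vv k d r) (s - t))" using Guv[of "s - t"] nt True by simp
      also have "\<dots> = G (\<lambda>r. Amat t b k d $$ (r, s - t))"
        unfolding G_def using st s by (intro sum.cong refl) (simp add: Amat_entry)
      finally show ?thesis using AW[OF s] AW[of "s - t"] s sm by simp
    next
      case False
      have sm: "s mod t = s - 2 * t"
      proof -
        have "s mod t = (s - t) mod t" using nt by (simp add: le_mod_geq)
        also have "\<dots> = (s - t - t) mod t" using False by (simp add: le_mod_geq)
        also have "\<dots> = s - 2 * t" using s False by simp
        finally show ?thesis .
      qed
      have "G (\<lambda>r. Amat t b k d $$ (r, s)) = G (\<lambda>r. ind (ww k d r) (s - 2 * t))"
        unfolding G_def using nt False s by (intro sum.cong refl) (simp add: Amat_entry)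
      also have "\<dots> = G (\<lambda>r. ind (vv k d r) (s - 2 * t))" using Gwv[of "s - 2 * t"] s by simp
      also have "\<dots> = G (\<lambda>r. Amat t b k d $$ (r, s - 2 * t))"
        using s False by (unfold G_def, intro sum.cong refl) (simp add: Amat_entry, linarith)
      finally show ?thesis using AW[OF s] AW[of "s - 2 * t"] s sm by simp
    qed
  qed
  thus ?thesis unfolding W_def X_def .
qed

definition mm :: "nat \<Rightarrow> (nat \<Rightarrow> nat \<Rightarrow> nat) \<Rightarrow> nat \<Rightarrow> nat \<Rightarrow> real" where
  "mm k d i a = bsum k (\<lambda>r. ind (vv k d r) a) i"

lemma bsum_add: "bsum k (\<lambda>r. f r + g r) i = bsum k f i + bsum k g i"
  unfolding bsum_def by (simp add: sum.distrib)

lemma bsum_X1: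
  assumes circ: "circular b k d" and i: "i < b" and a: "a < t"
  shows "bsum k (\<lambda>r. X1m t b k d $$ (r, a)) i = mm k d i a"
proof -
  have "bsum k (\<lambda>r. X1m t b k d $$ (r, a)) i = bsum k (\<lambda>r. Sx k d r a / 3) i"
    unfolding bsum_def using i a by (intro sum.cong refl) (simp add: X1m_entry idx_bound)
  also have "\<dots> = (bsum k (\<lambda>r. ind (uu k d r) a) i + bsum k (\<lambda>r. ind (vv k d r) a) i + bsum k (\<lambda>r. ind (ww k d r) a) i) / 3"
    unfolding Sx_def bsum_def by (simp add: sum.distrib sum_divide_distrib[symmetric])
  also have "\<dots> = mm k d i a" unfolding mm_def bsum_shift[OF circ i] by simp
  finally show ?thesis .
qed

lemma E_formula:
  assumes circ: "circular b k d" and a: "a < t" and c: "c < t"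
  shows "(transpose_mat (X1m t b k d) * (1\<^sub>m (b * k) - Qm b k) * X1m t b k d) $$ (a, c) =
    (3 * D0 b k d a c + 2 * N1 b k d a c + 2 * N1 b k d c a + N2 b k d a c + N2 b k d c a) / 9
    - (\<Sum>i<b. mm k d i a * mm k d i c) / k"
proof -
  have "(\<Sum>r<b * k. X1m t b k d $$ (r, a) * X1m t b k d $$ (r, c)) = (\<Sum>r<b * k. Sx k d r a * Sx k d r c) / 9"
    unfolding sum_divide_distrib using a c by (intro sum.cong refl) (simp add: X1m_entry)
  also have "(\<Sum>r<b * k. Sx k d r a * Sx k d r c) = (\<Sum>r<b*k. ind (uu k d r) a * Sx k d r c)
      + (\<Sum>r<b*k. ind (vv k d r) a * Sx k d r c) + (\<Sum>r<b*k. ind (ww k d r) a * Sx k d r c)"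
    unfolding sum.distrib[symmetric] by (intro sum.cong refl) (simp add: Sx_def distrib_right)
  also have "\<dots> = 3 * D0 b k d a c + 2 * N1 b k d a c + 2 * N1 b k d c a + N2 b k d a c + N2 b k d c a"
    unfolding FS_ids[OF circ] by simp
  finally have e1: "(\<Sum>r<b * k. X1m t b k d $$ (r, a) * X1m t b k d $$ (r, c)) =
     (3 * D0 b k d a c + 2 * N1 b k d a c + 2 * N1 b k d c a + N2 b k d a c + N2 b k d c a) / 9" .
  have e2: "(\<Sum>i<b. bsum k (\<lambda>r. X1m t b k d $$ (r, a)) i * bsum k (\<lambda>r. X1m t b k d $$ (r, c)) i) = (\<Sum>i<b. mm k d i a * mm k d i c)"
    using a c by (intro sum.cong refl) (simp add: bsum_X1[OF circ])
  show ?thesis unfolding E_entry[OF X1m_carrier a c] e1 e2 ..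
qed

lemma ind_sum: "x \<in> {1..t} \<Longrightarrow> (\<Sum>a<t. ind x a) = 1"
proof -
  assume x: "x \<in> {1..t}"
  have "(\<Sum>a<t. ind x a) = (\<Sum>a<t. if a = x - 1 then 1 else 0)"
    unfolding ind_def using x by (intro sum.cong refl) auto
  moreover have "x - 1 < t" using x by auto
  ultimately show ?thesis by simp
qed

lemma ind_sq: "ind x a * ind x a = ind x a" unfolding ind_def by simp
lemma ind_ne: "x \<noteq> y \<Longrightarrow> ind x a * ind y a = 0" unfolding ind_def by simp
lemma ind_ac: "a \<noteq> c \<Longrightarrow> ind x a * ind x c = 0" unfolding ind_def by simp

lemma mm_nat: "mm k d i a = real (card {j. j < k \<and> vv k d (i * k + j) = Suc a})"
  unfolding mm_def bsum_def ind_def by (rule sum_if_card)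

lemma mm_sq_ge: "mm k d i a \<le> mm k d i a * mm k d i a"
proof -
  have "card {j. j < k \<and> vv k d (i * k + j) = Suc a} \<le> card {j. j < k \<and> vv k d (i * k + j) = Suc a} * card {j. j < k \<and> vv k d (i * k + j) = Suc a}"
    by (rule le_square)
  hence "real (card {j. j < k \<and> vv k d (i * k + j) = Suc a}) \<le> real (card {j. j < k \<and> vv k d (i * k + j) = Suc a}) * real (card {j. j < k \<and> vv k d (i * k + j) = Suc a})"
    by (simp only: of_nat_le_iff of_nat_mult[symmetric])
  thus ?thesis unfolding mm_nat .
qed

lemma mm_binary:
  assumes bin: "binary_design b k d" and i: "i < b"
  shows "mm k d i a * mm k d i a = mm k d i a"
proof -
  define S where "S = {j. j < k \<and> vv k d (i * k + j) = Suc a}"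
  have inj: "inj_on (d (i+1)) {1..k}" using bin i unfolding binary_design_def by auto
  have "\<forall>j1\<in>S. \<forall>j2\<in>S. j1 = j2"
  proof (intro ballI)
    fix j1 j2 assume "j1 \<in> S" "j2 \<in> S"
    hence j: "j1 < k" "j2 < k" "d (i+1) (j1+1) = Suc a" "d (i+1) (j2+1) = Suc a"
      unfolding S_def vv_def by (auto simp: block_idx)
    hence "j1 + 1 = j2 + 1" using inj_onD[OF inj, of "j1+1" "j2+1"] by auto
    thus "j1 = j2" by simp
  qed
  moreover have "finite S" unfolding S_def by simp
  ultimately have "card S \<le> 1" using card_le_Suc0_iff_eq by (metis One_nat_def)
  hence "card S = 0 \<or> card S = 1" by auto
  thus ?thesis unfolding mm_nat S_def[symmetric] by auto
qed

lemma mm_rowsum: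
  assumes rg: "rng t b k d" and i: "i < b"
  shows "(\<Sum>a<t. mm k d i a) = k"
proof -
  have "(\<Sum>a<t. mm k d i a) = (\<Sum>j<k. \<Sum>a<t. ind (vv k d (i * k + j)) a)"
    unfolding mm_def bsum_def by (rule sum.swap)
  also have "\<dots> = (\<Sum>j<k. 1)"
    using rg i unfolding rng_def by (intro sum.cong refl) (simp add: ind_sum idx_bound)
  finally show ?thesis by simp
qed

lemma diagN:
  assumes tr: "tri b k d"
  shows "N1 b k d a a = 0" "N2 b k d a a = 0"
  unfolding N1_def N2_def using tr unfolding tri_def by (auto intro!: sum.neutral simp: ind_ne)

lemma D0_diag: "D0 b k d a a = (\<Sum>r<b*k. ind (vv k d r) a)"
  unfolding D0_def ind_sq ..

lemma trace_E:
  assumes circ: "circular b k d" and tr: "tri b k d" and rg: "rng t b k d" and k: "0 < k"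
  shows "mtrace (transpose_mat (X1m t b k d) * (1\<^sub>m (b * k) - Qm b k) * X1m t b k d)
     = real (b * k) / 3 - (\<Sum>i<b. \<Sum>a<t. mm k d i a * mm k d i a) / k"
proof -
  let ?E = "transpose_mat (X1m t b k d) * (1\<^sub>m (b * k) - Qm b k) * X1m t b k d"
  have dE: "dim_row ?E = t" unfolding X1m_def by simp
  have "mtrace ?E = (\<Sum>a<t. 3 * D0 b k d a a / 9 - (\<Sum>i<b. mm k d i a * mm k d i a) / k)"
    unfolding mtrace_def dE by (intro sum.cong refl) (simp add: E_formula[OF circ] diagN[OF tr])
  also have "\<dots> = (\<Sum>a<t. D0 b k d a a) / 3 - (\<Sum>a<t. \<Sum>i<b. mm k d i a * mm k d i a) / k"
    by (simp add: sum_subtractf sum_divide_distrib[symmetric])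
  also have "(\<Sum>a<t. \<Sum>i<b. mm k d i a * mm k d i a) = (\<Sum>i<b. \<Sum>a<t. mm k d i a * mm k d i a)"
    by (rule sum.swap)
  also have "(\<Sum>a<t. D0 b k d a a) = real (b * k)"
  proof -
    have "(\<Sum>a<t. D0 b k d a a) = (\<Sum>r<b*k. \<Sum>a<t. ind (vv k d r) a)"
      unfolding D0_diag by (rule sum.swap)
    also have "\<dots> = (\<Sum>r<b*k. 1)" using rg unfolding rng_def by (intro sum.cong refl) (simp add: ind_sum)
    finally show ?thesis by simp
  qed
  finally show ?thesis .
qed

lemma trace_E_le:
  assumes circ: "circular b k d" and tr: "tri b k d" and rg: "rng t b k d" and k: "0 < k"
  shows "mtrace (transpose_mat (X1m t b k d) * (1\<^sub>m (b * k) - Qm b k) * X1m t b k d) \<le> real b * (real k - 3) / 3"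
proof -
  have "(\<Sum>i<b. \<Sum>a<t. mm k d i a * mm k d i a) \<ge> (\<Sum>i<b. \<Sum>a<t. mm k d i a)"
    by (intro sum_mono mm_sq_ge)
  also have "(\<Sum>i<b. \<Sum>a<t. mm k d i a) = real b * k" using mm_rowsum[OF rg] by simp
  finally have S: "real b * k \<le> (\<Sum>i<b. \<Sum>a<t. mm k d i a * mm k d i a)" .
  have "(\<Sum>i<b. \<Sum>a<t. mm k d i a * mm k d i a) / k \<ge> real b" using k S by (simp add: le_divide_eq)
  thus ?thesis unfolding trace_E[OF assms] using k by (simp add: field_simps)
qed

lemma trace_E_eq:
  assumes circ: "circular b k d" and tr: "tri b k d" and rg: "rng t b k d" and k: "0 < k"
    and bin: "binary_design b k d"
  shows "mtrace (transpose_mat (X1m t b k d) * (1\<^sub>m (b * k) - Qm b k) * X1m t b k d) = real b * (real k - 3) / 3"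
proof -
  have "(\<Sum>i<b. \<Sum>a<t. mm k d i a * mm k d i a) = (\<Sum>i<b. \<Sum>a<t. mm k d i a)"
    by (intro sum.cong refl) (simp add: mm_binary[OF bin])
  also have "\<dots> = real b * k" using mm_rowsum[OF rg] by simp
  finally show ?thesis unfolding trace_E[OF circ tr rg k] using k by (simp add: field_simps)
qed

lemma N1_card: "N1 b k d a c = real (card {r. r < b * k \<and> vv k d r = Suc a \<and> ww k d r = Suc c})"
  unfolding N1_def ind_def by (simp add: sum_if_card[symmetric] if_distrib cong: if_cong) (intro sum.cong refl, auto)
lemma N2_card: "N2 b k d a c = real (card {r. r < b * k \<and> uu k d r = Suc a \<and> ww k d r = Suc c})"
  unfolding N2_def ind_def by (simp add: sum_if_card[symmetric] if_distrib cong: if_cong) (intro sum.cong refl, auto)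
lemma D0_card: "D0 b k d a a = real (card {r. r < b * k \<and> vv k d r = Suc a})"
  unfolding D0_diag ind_def by (rule sum_if_card)

lemma card_N1_inner: "0 < k \<Longrightarrow> card {(i,j) \<in> inner_plots b k. d i j = x \<and> d i (j+1) = y} = card {r. r < b * k \<and> vv k d r = x \<and> ww k d r = y}"
  unfolding card_inner vv_def ww_def by (simp add: add.assoc)
lemma card_N2_inner: "0 < k \<Longrightarrow> card {(i,j) \<in> inner_plots b k. d i (j-1) = x \<and> d i (j+1) = y} = card {r. r < b * k \<and> uu k d r = x \<and> ww k d r = y}"
  unfolding card_inner uu_def ww_def by (simp add: add.assoc)
lemma card_D0_inner: "0 < k \<Longrightarrow> card {(i,j) \<in> inner_plots b k. d i j = x} = card {r. r < b * k \<and> vv k d r = x}"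
  unfolding card_inner vv_def by simp

lemma mm_binary_ind:
  assumes bin: "binary_design b k d" and i: "i < b"
  shows "mm k d i a = (if Suc a \<in> d (i+1) ` {1..k} then 1 else 0)"
proof -
  define S where "S = {j. j < k \<and> vv k d (i * k + j) = Suc a}"
  have S: "S = {j. j < k \<and> d (i+1) (j+1) = Suc a}" unfolding S_def vv_def by (auto simp: block_idx)
  have m: "mm k d i a = real (card S)" unfolding mm_nat S_def ..
  have "card S = 0 \<or> card S = 1"
  proof -
    have "mm k d i a * mm k d i a = mm k d i a" by (rule mm_binary[OF bin i])
    hence "real (card S) * real (card S) = real (card S)" unfolding m .
    hence "card S * card S = card S" by (metis of_nat_eq_iff of_nat_mult)
    thus ?thesis by (cases "card S") auto
  qed
  moreover have "card S \<noteq> 0 \<longleftrightarrow> Suc a \<in> d (i+1) ` {1..k}"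
  proof -
    have "card S \<noteq> 0 \<longleftrightarrow> S \<noteq> {}" unfolding S by simp
    also have "\<dots> \<longleftrightarrow> Suc a \<in> d (i+1) ` {1..k}"
    proof
      assume "S \<noteq> {}" then obtain j where "j < k" "d (i+1) (j+1) = Suc a" unfolding S by auto
      thus "Suc a \<in> d (i+1) ` {1..k}" by (intro image_eqI[of _ _ "j+1"]) auto
    next
      assume "Suc a \<in> d (i+1) ` {1..k}"
      then obtain j' where "j' \<in> {1..k}" "d (i+1) j' = Suc a" by auto
      hence "j' - 1 \<in> S" unfolding S by auto
      thus "S \<noteq> {}" by auto
    qed
    finally show ?thesis .
  qed
  ultimately show ?thesis unfolding m by auto
qed

lemma sum_shift_card: fixes b :: nat shows "(\<Sum>i<b. if P (i+1) then 1 else 0 :: real) = real (card {i \<in> {1..b}. P i})"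
proof -
  have "(\<Sum>i<b. if P (i+1) then 1 else 0 :: real) = real (card {i. i < b \<and> P (i+1)})" by (rule sum_if_card)
  also have "card {i. i < b \<and> P (i+1)} = card {i \<in> {1..b}. P i}"
  proof (rule bij_betw_same_card[of Suc])
    show "bij_betw Suc {i. i < b \<and> P (i + 1)} {i \<in> {1..b}. P i}"
      by (rule bij_betw_byWitness[where f' = "\<lambda>i. i - 1"]) auto
  qed
  finally show ?thesis .
qed

lemma Estar_csym:
  assumes circ: "circular b k d" and tr: "tri b k d" and bin: "binary_design b k d" and k: "0 < k"
    and bal: "balanced_block_design t b k d"
    and nb1: "\<forall>a\<in>{1..t}. \<forall>c\<in>{1..t}. a \<noteq> c \<longrightarrow> card {(i,j) \<in> inner_plots b k. d i j = a \<and> d i (j+1) = c} = l"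
    and nb2: "\<forall>a\<in>{1..t}. \<forall>c\<in>{1..t}. a \<noteq> c \<longrightarrow> card {(i,j) \<in> inner_plots b k. d i (j-1) = a \<and> d i (j+1) = c} = l"
  shows "csym t (transpose_mat (X1m t b k d) * (1\<^sub>m (b * k) - Qm b k) * X1m t b k d)"
    and "\<forall>a<t. \<forall>c<t. N2 b k d a c = N1 b k d c a"
proof -
  let ?E = "transpose_mat (X1m t b k d) * (1\<^sub>m (b * k) - Qm b k) * X1m t b k d"
  obtain rep where rep: "\<forall>a\<in>{1..t}. card {(i,j) \<in> inner_plots b k. d i j = a} = rep"
    using bal unfolding balanced_block_design_def by blast
  obtain lam where lam: "\<forall>a\<in>{1..t}. \<forall>c\<in>{1..t}. a \<noteq> c \<longrightarrow> card {i\<in>{1..b}. a \<in> d i ` {1..k} \<and> c \<in> d i ` {1..k}} = lam"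
    using bal unfolding balanced_block_design_def by blast
  have N1v: "N1 b k d a c = l" if "a < t" "c < t" "a \<noteq> c" for a c
  proof -
    have "card {(i,j) \<in> inner_plots b k. d i j = Suc a \<and> d i (j+1) = Suc c} = l" using nb1 that by auto
    thus ?thesis unfolding N1_card card_N1_inner[OF k, symmetric] by simp
  qed
  have N2v: "N2 b k d a c = l" if "a < t" "c < t" "a \<noteq> c" for a c
  proof -
    have "card {(i,j) \<in> inner_plots b k. d i (j-1) = Suc a \<and> d i (j+1) = Suc c} = l" using nb2 that by auto
    thus ?thesis unfolding N2_card card_N2_inner[OF k, symmetric] by simp
  qed
  have D0v: "D0 b k d a a = rep" if "a < t" for a
  proof -
    have "card {(i,j) \<in> inner_plots b k. d i j = Suc a} = rep" using rep that by auto
    thus ?thesis unfolding D0_card card_D0_inner[OF k, symmetric] by simp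
  qed
  have D0o: "D0 b k d a c = 0" if "a \<noteq> c" for a c unfolding D0_def using that by (simp add: ind_ac)
  have mmo: "(\<Sum>i<b. mm k d i a * mm k d i c) = lam" if "a < t" "c < t" "a \<noteq> c" for a c
  proof -
    have "(\<Sum>i<b. mm k d i a * mm k d i c) = (\<Sum>i<b. if Suc a \<in> d (i+1) ` {1..k} \<and> Suc c \<in> d (i+1) ` {1..k} then 1 else 0)"
      by (intro sum.cong refl) (simp add: mm_binary_ind[OF bin])
    also have "\<dots> = real (card {i \<in> {1..b}. Suc a \<in> d i ` {1..k} \<and> Suc c \<in> d i ` {1..k}})"
      by (rule sum_shift_card[where P = "\<lambda>i. Suc a \<in> d i ` {1..k} \<and> Suc c \<in> d i ` {1..k}"])
    also have "\<dots> = lam" using lam that by auto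
    finally show ?thesis .
  qed
  have mmd: "(\<Sum>i<b. mm k d i a * mm k d i a) = rep" if "a < t" for a
  proof -
    have "(\<Sum>i<b. mm k d i a * mm k d i a) = (\<Sum>i<b. mm k d i a)"
      by (intro sum.cong refl) (simp add: mm_binary[OF bin])
    also have "\<dots> = (\<Sum>r<b*k. ind (vv k d r) a)" unfolding mm_def bsum_def sum_blocks ..
    also have "\<dots> = rep" using D0v[OF that] unfolding D0_diag .
    finally show ?thesis .
  qed
  show "\<forall>a<t. \<forall>c<t. N2 b k d a c = N1 b k d c a"
  proof (intro allI impI)
    fix a c assume ac: "a < t" "c < t"
    show "N2 b k d a c = N1 b k d c a"
    proof (cases "a = c")
      case True thus ?thesis using diagN[OF tr] by simp
    next
      case False thus ?thesis using N1v N2v ac by simp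
    qed
  qed
  have Ed: "?E $$ (a, a) = 3 * rep / 9 - rep / k" if "a < t" for a
    using that by (simp add: E_formula[OF circ] diagN[OF tr] D0v mmd)
  have Eo: "?E $$ (a, c) = 6 * l / 9 - lam / k" if "a < t" "c < t" "a \<noteq> c" for a c
    using that by (simp add: E_formula[OF circ] D0o N1v N2v mmo)
  show "csym t ?E" unfolding csym_def
  proof (intro conjI allI impI)
    show "?E \<in> carrier_mat t t"
      by (rule mult_carrier_mat[OF mult_carrier_mat[OF _ minus_carrier_mat[OF Q_carrier]] X1m_carrier])
        (simp add: X1m_carrier)
    fix i j assume "i < t" "j < t" thus "?E $$ (i, i) = ?E $$ (j, j)" using Ed by simp
  next
    fix i j i' j' assume "i < t" "j < t" "i' < t" "j' < t" "i \<noteq> j" "i' \<noteq> j'"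
    thus "?E $$ (i, j) = ?E $$ (i', j')" using Eo by simp
  qed
qed

lemma C_total_form:
  "C_total t b k d = transpose_mat (X1m t b k d) * proj_perp (hconcat (Amat t b k d * Mm t) (block_matrix b k)) * X1m t b k d"
proof -
  have X1: "hconcat (hconcat (T_mat t b k d) (L_mat t b k d)) (R_mat t b k d) * K_mat t * mp_inverse (transpose_mat (K_mat t) * K_mat t) = X1m t b k d"
    using X1_eq[of t b k d] unfolding Amat_def .
  have dK: "dim_row (K_mat t) = 3 * t" using Kmat_carrier[of t] by simp
  have M: "1\<^sub>m (dim_row (K_mat t)) - K_mat t * mp_inverse (transpose_mat (K_mat t) * K_mat t) * transpose_mat (K_mat t) = Mm t"
    unfolding Mm_def dK mp_KtK ..
  show ?thesis unfolding C_total_def info_subsystem_def Let_def X1 M Amat_def ..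
qed

lemma nnd_diag: assumes "nnd_sym t C" "i < t" shows "C $$ (i, i) \<ge> 0"
proof -
  have Cc: "C \<in> carrier_mat t t" using assms unfolding nnd_sym_def by auto
  have u: "unit_vec t i \<in> carrier_vec t" by simp
  have "unit_vec t i \<bullet> (C *\<^sub>v unit_vec t i) \<ge> 0" using assms(1) u unfolding nnd_sym_def by blast
  also have "unit_vec t i \<bullet> (C *\<^sub>v unit_vec t i) = (\<Sum>a<t. \<Sum>c<t. unit_vec t i $ a * C $$ (a, c) * unit_vec t i $ c)"
    by (rule quad_form[OF Cc u])
  also have "\<dots> = (\<Sum>a<t. if a = i then C $$ (i, i) else 0)"
    using assms(2) by (intro sum.cong refl) (auto simp: unit_vec_def sum_delta_real)
  also have "\<dots> = C $$ (i, i)" using assms(2) by simp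
  finally show ?thesis .
qed

lemma nnd_trace: "nnd_sym t C \<Longrightarrow> mtrace C \<ge> 0"
  unfolding mtrace_def by (intro sum_nonneg) (auto simp: nnd_diag nnd_sym_def)

lemma X1_rowsum:
  assumes rg: "rng t b k d"
  shows "X1m t b k d *\<^sub>v onev t = block_matrix b k *\<^sub>v onev b"
proof (rule eq_vecI)
  fix r assume "r < dim_vec (block_matrix b k *\<^sub>v onev b)"
  hence r: "r < b * k" using Bm_carrier[of b k] by simp
  have "(X1m t b k d *\<^sub>v onev t) $ r = (\<Sum>c<t. Sx k d r c / 3)"
    using r by (simp add: X1m_def onev_def scalar_prod_def lessThan_atLeast0)
  also have "\<dots> = ((\<Sum>c<t. ind (uu k d r) c) + (\<Sum>c<t. ind (vv k d r) c) + (\<Sum>c<t. ind (ww k d r) c)) / 3"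
    unfolding Sx_def by (simp add: sum.distrib sum_divide_distrib[symmetric])
  also have "\<dots> = 1" using rg r unfolding rng_def by (simp add: ind_sum)
  also have "1 = (block_matrix b k *\<^sub>v onev b) $ r"
  proof -
    have rb: "r div k < b" using r by (rule div_bound)
    have "(block_matrix b k *\<^sub>v onev b) $ r = (\<Sum>i<b. if r div k = i then 1 else 0)"
      using r Bm_carrier[of b k] by (simp add: onev_def scalar_prod_def lessThan_atLeast0 Bm_entry)
    also have "\<dots> = 1" using rb by simp
    finally show ?thesis by simp
  qed
  finally show "(X1m t b k d *\<^sub>v onev t) $ r = (block_matrix b k *\<^sub>v onev b) $ r" .
qed (use Bm_carrier[of b k] in \<open>simp add: X1m_def\<close>)

lemma zrs_of: assumes C: "C \<in> carrier_mat t t" and z: "C *\<^sub>v onev t = 0\<^sub>v t" shows "zrs t C"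
  unfolding zrs_def
proof (intro allI impI)
  fix i assume i: "i < t"
  have "(C *\<^sub>v onev t) $ i = (\<Sum>j<t. C $$ (i, j))" using C i by (simp add: onev_def scalar_prod_def lessThan_atLeast0)
  thus "(\<Sum>j<t. C $$ (i, j)) = 0" using z i by simp
qed

lemma design_facts:
  assumes d: "d \<in> Omega t b k" and tr: "tri b k d" and k: "0 < k"
  shows "nnd_sym t (C_total t b k d)" "zrs t (C_total t b k d)"
    "mtrace (C_total t b k d) \<le> mtrace (transpose_mat (X1m t b k d) * (1\<^sub>m (b * k) - Qm b k) * X1m t b k d)"
    "(\<forall>a<t. \<forall>c<t. N2 b k d a c = N1 b k d c a) \<Longrightarrow> C_total t b k d = transpose_mat (X1m t b k d) * (1\<^sub>m (b * k) - Qm b k) * X1m t b k d"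
proof -
  have circ: "circular b k d" using d unfolding Omega_def by simp
  have rg: "rng t b k d" by (rule rng_Omega[OF d])
  have U: "Amat t b k d * Mm t \<in> carrier_mat (b * k) (3 * t)" using Amat_carrier Mm_carrier by (rule mult_carrier_mat)
  note IA = info_analysis[OF X1m_carrier U Bm_carrier Q_carrier Q_sym Q_idem[OF k] F_carrier Q_BF]
  show nn: "nnd_sym t (C_total t b k d)" unfolding C_total_form by (rule IA(1))
  show "mtrace (C_total t b k d) \<le> mtrace (transpose_mat (X1m t b k d) * (1\<^sub>m (b * k) - Qm b k) * X1m t b k d)"
    unfolding C_total_form by (rule IA(2))
  have "C_total t b k d *\<^sub>v onev t = 0\<^sub>v t" unfolding C_total_form by (rule IA(3)[OF X1_rowsum[OF rg]])
  thus "zrs t (C_total t b k d)" using nn unfolding nnd_sym_def by (intro zrs_of) auto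
  assume NN: "\<forall>a<t. \<forall>c<t. N2 b k d a c = N1 b k d c a"
  have W: "(1\<^sub>m (b * k) - Qm b k) * X1m t b k d \<in> carrier_mat (b * k) t" by (rule W_carrier[OF X1m_carrier])
  have Z1: "transpose_mat (Amat t b k d * Mm t) * ((1\<^sub>m (b * k) - Qm b k) * X1m t b k d) = 0\<^sub>m (3 * t) t"
    by (rule UtW_zero[OF W Amat_carrier AtW_per[OF circ NN]])
  have Z2: "transpose_mat (block_matrix b k) * ((1\<^sub>m (b * k) - Qm b k) * X1m t b k d) = 0\<^sub>m b t"
    by (rule BtW[OF X1m_carrier k])
  show "C_total t b k d = transpose_mat (X1m t b k d) * (1\<^sub>m (b * k) - Qm b k) * X1m t b k d"
    unfolding C_total_form by (rule IA(4)[OF Z1 Z2])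
qed

theorem theorem7:
  fixes t b k :: nat and dstar :: "nat \<Rightarrow> nat \<Rightarrow> nat"
  assumes "0 < b" and "4 \<le> k" and "k \<le> t"
    and "t * (t - 1) dvd b * k"
    and "dstar \<in> Omega t b k"
    and "CNBD2 t b k (b * k div (t * (t - 1))) dstar"
  shows "universally_optimal t (C_total t b k) dstar
           {d \<in> Omega t b k. no_self_neighbors b k d}"
  unfolding universally_optimal_def
proof (intro allI impI ballI)
  fix \<Phi> d assume K: "kiefer_criterion t \<Phi>" and dD: "d \<in> {d \<in> Omega t b k. no_self_neighbors b k d}"
  define l where "l = b * k div (t * (t - 1))"
  have k: "0 < k" using assms(2) by simp
  have t2: "2 \<le> t" using assms(2,3) by simp
  have cn: "CNBD t b k l dstar" and nb2: "\<forall>a\<in>{1..t}. \<forall>c\<in>{1..t}. a \<noteq> c \<longrightarrow>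
        card {(i,j) \<in> inner_plots b k. dstar i (j-1) = a \<and> dstar i (j+1) = c} = l"
    using assms(6) unfolding CNBD2_def l_def by auto
  have sO: "dstar \<in> Omega t b k" and bin: "binary_design b k dstar" and bal: "balanced_block_design t b k dstar"
    and nb1: "\<forall>a\<in>{1..t}. \<forall>c\<in>{1..t}. a \<noteq> c \<longrightarrow> card {(i,j) \<in> inner_plots b k. dstar i j = a \<and> dstar i (j+1) = c} = l"
    using cn unfolding CNBD_def by auto
  have scirc: "circular b k dstar" using sO unfolding Omega_def by simp
  have str: "tri b k dstar" using tri_binary[OF scirc bin] assms(2) by simp
  have srg: "rng t b k dstar" by (rule rng_Omega[OF sO])
  note ES = Estar_csym[OF scirc str bin k bal nb1 nb2]
  note sf = design_facts[OF sO str k]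
  have Ceq: "C_total t b k dstar = transpose_mat (X1m t b k dstar) * (1\<^sub>m (b * k) - Qm b k) * X1m t b k dstar"
    by (rule sf(4)[OF ES(2)])
  have trs: "mtrace (C_total t b k dstar) = real b * (real k - 3) / 3"
    unfolding Ceq by (rule trace_E_eq[OF scirc str srg k bin])
  have trpos: "mtrace (C_total t b k dstar) > 0" unfolding trs using assms(1,2) by simp
  have dO: "d \<in> Omega t b k" and dn: "no_self_neighbors b k d" using dD by auto
  have dcirc: "circular b k d" using dO unfolding Omega_def by simp
  have dtr: "tri b k d" by (rule tri_nsn[OF dcirc dn])
  have drg: "rng t b k d" by (rule rng_Omega[OF dO])
  note df = design_facts[OF dO dtr k]
  have "mtrace (C_total t b k d) \<le> real b * (real k - 3) / 3"
    using df(3) trace_E_le[OF dcirc dtr drg k] by linarith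
  hence trle: "mtrace (C_total t b k d) \<le> mtrace (C_total t b k dstar)" unfolding trs .
  show "\<Phi> (C_total t b k dstar) \<le> \<Phi> (C_total t b k d)"
  proof (rule kiefer_main[OF t2 K _ sf(2) sf(1) trpos df(1) df(2) nnd_trace[OF df(1)] trle])
    show "csym t (C_total t b k dstar)" unfolding Ceq by (rule ES(1))
  qed
qed

end
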